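(* Let $\Psi$ be a set and let $A$ be a left noetherian associative unital ring endowed with a smooth action of $\mathfrak S_\Psi$ by ring automorphisms. Then every smooth finitely generated left $A\langle\mathfrak S_\Psi\rangle$-module $W$ is noetherian when considered as a left $A\langle U\rangle$-module, for every open subgroup $U\subseteq\mathfrak S_\Psi$.
   Context: $\mathfrak S_\Psi$ is the group of all permutations of $\Psi$, with the topology whose base of open neighbourhoods of the identity consists of the pointwise stabilizers $\mathfrak S_{\Psi|T}$ of finite subsets $T\subset\Psi$. For a ring $A$ with an action of a group $G$ by ring automorphisms ($a\mapsto a^g$), $A\langle G\rangle$ is the skew group ring: the free left $A$-module on $G$ with multiplication $(a[g])(b[h])=ab^g[gh]$. An action (on a ring or on a module) is smooth if the stabilizer of every element is open. A module is finitely generated if it is generated by finitely many elements. *)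

theory Defs
  imports "HOL-Combinatorics.Permutations"
begin

definition Sym :: "'p set \<Rightarrow> ('p \<Rightarrow> 'p) set" where
  "Sym \<Psi> = {\<sigma>. \<sigma> permutes \<Psi>}"

definition pstab :: "'p set \<Rightarrow> 'p set \<Rightarrow> ('p \<Rightarrow> 'p) set" where
  "pstab \<Psi> T = {\<sigma> \<in> Sym \<Psi>. \<forall>t\<in>T. \<sigma> t = t}"

definition perm_open :: "'p set \<Rightarrow> ('p \<Rightarrow> 'p) set \<Rightarrow> bool" where
  "perm_open \<Psi> U \<longleftrightarrow> U \<subseteq> Sym \<Psi> \<and>
     (\<forall>g\<in>U. \<exists>T. finite T \<and> T \<subseteq> \<Psi> \<and> (\<lambda>h. g \<circ> h) ` pstab \<Psi> T \<subseteq> U)"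

definition perm_subgroup :: "'p set \<Rightarrow> ('p \<Rightarrow> 'p) set \<Rightarrow> bool" where
  "perm_subgroup \<Psi> U \<longleftrightarrow> U \<subseteq> Sym \<Psi> \<and> id \<in> U \<and>
     (\<forall>g\<in>U. \<forall>h\<in>U. g \<circ> h \<in> U) \<and> (\<forall>g\<in>U. inv g \<in> U)"

definition open_subgroup :: "'p set \<Rightarrow> ('p \<Rightarrow> 'p) set \<Rightarrow> bool" where
  "open_subgroup \<Psi> U \<longleftrightarrow> perm_subgroup \<Psi> U \<and> perm_open \<Psi> U"

definition left_ideal :: "'a::{ring,monoid_mult} set \<Rightarrow> bool" where
  "left_ideal I \<longleftrightarrow> 0 \<in> I \<and> (\<forall>x\<in>I. \<forall>y\<in>I. x + y \<in> I) \<and> (\<forall>x\<in>I. - x \<in> I)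
     \<and> (\<forall>a. \<forall>x\<in>I. a * x \<in> I)"

definition left_noetherian :: "'a::{ring,monoid_mult} itself \<Rightarrow> bool" where
  "left_noetherian _ \<longleftrightarrow> (\<forall>I::'a set. left_ideal I \<longrightarrow>
     (\<exists>F. finite F \<and> F \<subseteq> I \<and> I = {\<Sum>f\<in>F. c f * f | c. True}))"

definition ring_aut_action :: "'p set \<Rightarrow> (('p \<Rightarrow> 'p) \<Rightarrow> 'a::{ring,monoid_mult} \<Rightarrow> 'a) \<Rightarrow> bool" where
  "ring_aut_action \<Psi> act \<longleftrightarrow>
     (\<forall>g\<in>Sym \<Psi>. bij (act g) \<and> act g 1 = 1 \<and>
        (\<forall>a b. act g (a + b) = act g a + act g b) \<and> (\<forall>a b. act g (a * b) = act g a * act g b)) \<and>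
     (\<forall>a. act id a = a) \<and>
     (\<forall>g\<in>Sym \<Psi>. \<forall>h\<in>Sym \<Psi>. \<forall>a. act (g \<circ> h) a = act g (act h a))"

definition smooth_ring_action :: "'p set \<Rightarrow> (('p \<Rightarrow> 'p) \<Rightarrow> 'a \<Rightarrow> 'a) \<Rightarrow> bool" where
  "smooth_ring_action \<Psi> act \<longleftrightarrow> (\<forall>a. perm_open \<Psi> {g \<in> Sym \<Psi>. act g a = a})"

text \<open>Elements: finitely supported functions G -> A; x corresponds to sum of x g [g].\<close>
definition skew_carrier :: "('p \<Rightarrow> 'p) set \<Rightarrow> (('p \<Rightarrow> 'p) \<Rightarrow> 'a::zero) set" where
  "skew_carrier G = {x. finite {g. x g \<noteq> 0} \<and> (\<forall>g. x g \<noteq> 0 \<longrightarrow> g \<in> G)}"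

definition skew_add :: "(('p \<Rightarrow> 'p) \<Rightarrow> 'a::plus) \<Rightarrow> (('p \<Rightarrow> 'p) \<Rightarrow> 'a) \<Rightarrow> ('p \<Rightarrow> 'p) \<Rightarrow> 'a" where
  "skew_add x y = (\<lambda>k. x k + y k)"

text \<open>(a[g])(b[h]) = a (act g b) [g o h].\<close>
definition skew_mult :: "(('p \<Rightarrow> 'p) \<Rightarrow> 'a::{ring,monoid_mult} \<Rightarrow> 'a) \<Rightarrow>
    (('p \<Rightarrow> 'p) \<Rightarrow> 'a) \<Rightarrow> (('p \<Rightarrow> 'p) \<Rightarrow> 'a) \<Rightarrow> ('p \<Rightarrow> 'p) \<Rightarrow> 'a" where
  "skew_mult act x y = (\<lambda>k. \<Sum>g\<in>{g. x g \<noteq> 0}. \<Sum>h\<in>{h. y h \<noteq> 0}.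
       if g \<circ> h = k then x g * act g (y h) else 0)"

definition skew_delta :: "('p \<Rightarrow> 'p) \<Rightarrow> 'a::zero \<Rightarrow> ('p \<Rightarrow> 'p) \<Rightarrow> 'a" where
  "skew_delta g a = (\<lambda>k. if k = g then a else 0)"

definition skew_one :: "('p \<Rightarrow> 'p) \<Rightarrow> 'a::{zero,one}" where
  "skew_one = skew_delta id 1"

definition skew_module :: "('p \<Rightarrow> 'p) set \<Rightarrow> (('p \<Rightarrow> 'p) \<Rightarrow> 'a::{ring,monoid_mult} \<Rightarrow> 'a) \<Rightarrow>
    ((('p \<Rightarrow> 'p) \<Rightarrow> 'a) \<Rightarrow> 'w::ab_group_add \<Rightarrow> 'w) \<Rightarrow> bool" where
  "skew_module G act smult \<longleftrightarrow>
     (\<forall>x\<in>skew_carrier G. \<forall>y\<in>skew_carrier G. \<forall>w. smult (skew_add x y) w = smult x w + smult y w) \<and>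
     (\<forall>x\<in>skew_carrier G. \<forall>v w. smult x (v + w) = smult x v + smult x w) \<and>
     (\<forall>x\<in>skew_carrier G. \<forall>y\<in>skew_carrier G. \<forall>w. smult (skew_mult act x y) w = smult x (smult y w)) \<and>
     (\<forall>w. smult skew_one w = w)"

definition smooth_module :: "'p set \<Rightarrow> ((('p \<Rightarrow> 'p) \<Rightarrow> 'a::{ring,monoid_mult}) \<Rightarrow> 'w \<Rightarrow> 'w) \<Rightarrow> bool" where
  "smooth_module \<Psi> smult \<longleftrightarrow>
     (\<forall>w. perm_open \<Psi> {g \<in> Sym \<Psi>. smult (skew_delta g 1) w = w})"

definition mspan :: "'r set \<Rightarrow> ('r \<Rightarrow> 'w \<Rightarrow> 'w::ab_group_add) \<Rightarrow> 'w set \<Rightarrow> 'w set" where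
  "mspan C smult F = {\<Sum>f\<in>F. smult (c f) f | c. \<forall>f\<in>F. c f \<in> C}"

definition fin_gen_module :: "'r set \<Rightarrow> ('r \<Rightarrow> 'w \<Rightarrow> 'w::ab_group_add) \<Rightarrow> bool" where
  "fin_gen_module C smult \<longleftrightarrow> (\<exists>F. finite F \<and> UNIV = mspan C smult F)"

definition submodule :: "'r set \<Rightarrow> ('r \<Rightarrow> 'w \<Rightarrow> 'w::ab_group_add) \<Rightarrow> 'w set \<Rightarrow> bool" where
  "submodule C smult N \<longleftrightarrow> 0 \<in> N \<and> (\<forall>v\<in>N. \<forall>w\<in>N. v + w \<in> N) \<and> (\<forall>x\<in>C. \<forall>w\<in>N. smult x w \<in> N)"

definition noetherian_module :: "'r set \<Rightarrow> ('r \<Rightarrow> 'w \<Rightarrow> 'w::ab_group_add) \<Rightarrow> bool" where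
  "noetherian_module C smult \<longleftrightarrow> (\<forall>N. submodule C smult N \<longrightarrow>
     (\<exists>F. finite F \<and> F \<subseteq> N \<and> N = mspan C smult F))"

end

theory Submission
  imports Defs Complex_Main "HOL-Library.List_Lexorder" "HOL-Library.Countable_Set" "HOL-Library.Infinite_Set"
begin


lemma perm_extend:
  assumes "finite K" "inj_on h K"
  shows "\<exists>p. p permutes (K \<union> h ` K) \<and> (\<forall>x\<in>K. p x = h x)"
proof -
  define F where "F = K \<union> h ` K"
  have fF: "finite F" using assms unfolding F_def by blast
  have sub1: "K \<subseteq> F" and sub2: "h ` K \<subseteq> F" unfolding F_def by blast+
  have c1: "card (F - K) = card F - card K" by (rule card_Diff_subset[OF assms(1) sub1])
  have c2: "card (F - h ` K) = card F - card (h ` K)" by (rule card_Diff_subset[OF finite_imageI[OF assms(1)] sub2])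
  have "card (h ` K) = card K" using assms(2) by (rule card_image)
  with c1 c2 have "card (F - K) = card (F - h ` K)" by simp
  moreover have "finite (F - K)" "finite (F - h ` K)" using fF by blast+
  ultimately obtain b where b: "bij_betw b (F - K) (F - h ` K)"
    using finite_same_card_bij by metis
  define p where "p = (\<lambda>x. if x \<in> K then h x else if x \<in> F then b x else x)"
  have b1: "bij_betw p K (h ` K)"
  proof -
    have "bij_betw h K (h ` K)" using assms(2) by (simp add: bij_betw_imageI)
    moreover have "bij_betw p K (h ` K) = bij_betw h K (h ` K)"
      by (rule bij_betw_cong) (simp add: p_def)
    ultimately show ?thesis by simp
  qed
  have b2: "bij_betw p (F - K) (F - h ` K)"
  proof -
    have "bij_betw p (F - K) (F - h ` K) = bij_betw b (F - K) (F - h ` K)"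
      by (rule bij_betw_cong) (simp add: p_def)
    then show ?thesis using b by simp
  qed
  have "bij_betw p (K \<union> (F - K)) (h ` K \<union> (F - h ` K))"
    by (rule bij_betw_combine[OF b1 b2]) blast
  moreover have "K \<union> (F - K) = F" "h ` K \<union> (F - h ` K) = F" using sub1 sub2 by blast+
  ultimately have "bij_betw p F F" by simp
  moreover have "{x. p x \<noteq> x} \<subseteq> F" unfolding p_def using sub1 by auto
  ultimately have "p permutes F" unfolding permutes_altdef by blast
  moreover have "\<forall>x\<in>K. p x = h x" unfolding p_def by simp
  ultimately show ?thesis unfolding F_def by blast
qed

lemma subseq_const:
  fixes s :: "nat \<Rightarrow> 'a"
  assumes "finite F" "\<And>k. s k \<in> F"
  shows "\<exists>(\<psi>::nat\<Rightarrow>nat) v. strict_mono \<psi> \<and> (\<forall>k. s (\<psi> k) = v)"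
proof -
  have "range s \<subseteq> F" using assms(2) by blast
  then have "finite (range s)" using assms(1) finite_subset by blast
  then obtain a where a: "infinite {k \<in> UNIV. s k = s a}"
    using pigeonhole_infinite[of "UNIV :: nat set" s] by blast
  obtain r :: "nat \<Rightarrow> nat" where r: "strict_mono r" "\<And>n. r n \<in> {k \<in> UNIV. s k = s a}"
    using infinite_enumerate[OF a] by blast
  have "\<forall>k. s (r k) = s a" using r(2) by simp
  then show ?thesis using r(1) by blast
qed

lemma subseq_mono1:
  fixes s :: "nat \<Rightarrow> nat"
  shows "\<exists>\<psi>::nat\<Rightarrow>nat. strict_mono \<psi> \<and> mono (\<lambda>k. s (\<psi> k))"
proof -
  obtain f :: "nat \<Rightarrow> nat" where f: "strict_mono f" "monoseq (\<lambda>n. s (f n))" using seq_monosub by blast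
  show ?thesis
  proof (cases "\<forall>m n. m \<le> n \<longrightarrow> s (f m) \<le> s (f n)")
    case True
    have "mono (\<lambda>k. s (f k))" using True by (auto simp: mono_def)
    then show ?thesis using f(1) by blast
  next
    case False
    then have dec: "\<forall>m n. m \<le> n \<longrightarrow> s (f n) \<le> s (f m)" using f(2) unfolding monoseq_def by blast
    have "\<And>k. s (f k) \<in> {..s (f 0)}" using dec by auto
    then obtain \<psi> :: "nat \<Rightarrow> nat" and v where "strict_mono \<psi>" "\<forall>k. s (f (\<psi> k)) = v"
      using subseq_const[of "{..s (f 0)}" "\<lambda>k. s (f k)"] by blast
    moreover have "strict_mono (f \<circ> \<psi>)" using f(1) \<open>strict_mono \<psi>\<close> by (simp add: strict_mono_def)
    ultimately have "strict_mono (f \<circ> \<psi>) \<and> mono (\<lambda>k. s ((f \<circ> \<psi>) k))" by (simp add: mono_def)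
    then show ?thesis by blast
  qed
qed


lemma subseq_mono_fin:
  fixes s :: "nat \<Rightarrow> 'i \<Rightarrow> nat"
  assumes "finite I"
  shows "\<exists>\<psi>::nat\<Rightarrow>nat. strict_mono \<psi> \<and> (\<forall>i\<in>I. mono (\<lambda>k. s (\<psi> k) i))"
  using assms
proof (induction I rule: finite_induct)
  case empty
  have "strict_mono (\<lambda>k::nat. k)" by (simp add: strict_mono_def)
  then show ?case by blast
next
  case (insert i I)
  then obtain \<psi> :: "nat \<Rightarrow> nat" where \<psi>: "strict_mono \<psi>" "\<forall>i\<in>I. mono (\<lambda>k. s (\<psi> k) i)" by blast
  obtain \<phi> :: "nat \<Rightarrow> nat" where \<phi>: "strict_mono \<phi>" "mono (\<lambda>k. s (\<psi> (\<phi> k)) i)"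
    using subseq_mono1[of "\<lambda>k. s (\<psi> k) i"] by blast
  have "strict_mono (\<psi> \<circ> \<phi>)" using \<psi>(1) \<phi>(1) by (simp add: strict_mono_def)
  moreover have "\<forall>j\<in>insert i I. mono (\<lambda>k. s ((\<psi> \<circ> \<phi>) k) j)"
  proof
    fix j assume "j \<in> insert i I"
    then show "mono (\<lambda>k. s ((\<psi> \<circ> \<phi>) k) j)"
    proof
      assume "j = i" then show ?thesis using \<phi>(2) by simp
    next
      assume "j \<in> I"
      then have m: "mono (\<lambda>k. s (\<psi> k) j)" using \<psi>(2) by blast
      have "mono \<phi>" using \<phi>(1) strict_mono_mono by blast
      then show ?thesis using m by (auto simp: mono_def)
    qed
  qed
  ultimately show ?case by blast
qed


lemma shift_map:
  fixes u u' :: "nat list"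
  assumes len: "length u' = length u"
    and pat: "\<forall>i<length u. \<forall>j<length u. (u!i < u!j) = (u'!i < u'!j)"
    and le: "\<forall>i<length u. u!i \<le> u'!i"
    and gap: "\<forall>i<length u. \<forall>j<length u. u!j - u!i \<le> u'!j - u'!i"
  shows "\<exists>h. strict_mono h \<and> map h u = u'"
proof -
  define M where "M x = Max (insert 0 {u'!i - u!i | i. i < length u \<and> u!i \<le> x})" for x
  define h where "h x = x + M x" for x
  have fin: "finite {u'!i - u!i | i. i < length u \<and> u!i \<le> x}" for x
  proof -
    have "{u'!i - u!i | i. i < length u \<and> u!i \<le> x} \<subseteq> (\<lambda>i. u'!i - u!i) ` {..<length u}" by blast
    then show ?thesis using finite_subset by blast
  qed
  have Mmono: "M x \<le> M y" if "x \<le> y" for x y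
    unfolding M_def using fin that by (intro Max_mono) auto
  have "strict_mono h"
  proof (rule strict_monoI)
    fix x y :: nat assume xy: "x < y"
    then have "M x \<le> M y" using Mmono by simp
    then show "h x < h y" unfolding h_def using xy by linarith
  qed
  moreover have "h (u!j) = u'!j" if j: "j < length u" for j
  proof -
    have key: "u'!i - u!i \<le> u'!j - u!j" if i: "i < length u" "u!i \<le> u!j" for i
    proof (cases "u!i < u!j")
      case True
      have "(u!i < u!j) = (u'!i < u'!j)" using pat i(1) j by simp
      then have "u'!i < u'!j" using True by simp
      moreover have "u!j - u!i \<le> u'!j - u'!i" using gap i(1) j by simp
      ultimately show ?thesis using le i(1) j True by simp
    next
      case False
      then have "u!i = u!j" using i by simp
      moreover have "(u!i < u!j) = (u'!i < u'!j)" "(u!j < u!i) = (u'!j < u'!i)" using pat i(1) j by simp_all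
      ultimately have "\<not> u'!i < u'!j" "\<not> u'!j < u'!i" by simp_all
      then have "u'!i = u'!j" by simp
      then show ?thesis using \<open>u!i = u!j\<close> by simp
    qed
    have "M (u!j) = u'!j - u!j"
      unfolding M_def
    proof (rule antisym)
      show "Max (insert 0 {u'!i - u!i | i. i < length u \<and> u!i \<le> u!j}) \<le> u'!j - u!j"
        using fin key by (subst Max_le_iff) auto
      show "u'!j - u!j \<le> Max (insert 0 {u'!i - u!i | i. i < length u \<and> u!i \<le> u!j})"
        using fin j by (intro Max_ge) auto
    qed
    then show ?thesis unfolding h_def using le j by simp
  qed
  moreover have "map h u = u'" using len calculation(2) by (intro nth_equalityI) auto
  ultimately show ?thesis by blast
qed





lemma nat_list_transport:
  fixes us :: "nat \<Rightarrow> nat list" and tag :: "nat \<Rightarrow> 'b"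
  assumes len: "\<And>k. length (us k) = L" and fT: "finite Tg" and tg: "\<And>k. tag k \<in> Tg"
  shows "\<exists>\<psi>::nat\<Rightarrow>nat. strict_mono \<psi> \<and> (\<forall>j. tag (\<psi> j) = tag (\<psi> 0)) \<and>
           (\<forall>j. \<exists>h. strict_mono h \<and> map h (us (\<psi> j)) = us (\<psi> (Suc j)))"
proof -
  define pat where "pat u = {(i,j). i<L \<and> j<L \<and> (u::nat list)!i < u!j}" for u
  have "(tag k, pat (us k)) \<in> Tg \<times> Pow ({..<L}\<times>{..<L})" for k
    using tg unfolding pat_def by auto
  moreover have "finite (Tg \<times> Pow ({..<L}\<times>{..<L}))" using fT by simp
  ultimately obtain \<psi>1 :: "nat \<Rightarrow> nat" and v where p1: "strict_mono \<psi>1" "\<forall>k. (tag (\<psi>1 k), pat (us (\<psi>1 k))) = v"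
    using subseq_const[of "Tg \<times> Pow ({..<L}\<times>{..<L})" "\<lambda>k. (tag k, pat (us k))"] by blast
  define s where "s k idx = (case idx of Inl i \<Rightarrow> us (\<psi>1 k) ! i | Inr (i,j) \<Rightarrow> us (\<psi>1 k) ! j - us (\<psi>1 k) ! i)" for k idx
  define I where "I = Inl ` {..<L} \<union> Inr ` ({..<L}\<times>{..<L})"
  have "finite I" unfolding I_def by simp
  then obtain \<psi>2 :: "nat \<Rightarrow> nat" where p2: "strict_mono \<psi>2" "\<forall>i\<in>I. mono (\<lambda>k. s (\<psi>2 k) i)"
    using subseq_mono_fin[of I s] by blast
  define \<psi> where "\<psi> = \<psi>1 \<circ> \<psi>2"
  have sm: "strict_mono \<psi>" unfolding \<psi>_def using p1(1) p2(1) by (simp add: strict_mono_def)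
  have tagc: "\<forall>j. tag (\<psi> j) = tag (\<psi> 0)" unfolding \<psi>_def using p1(2) by (metis comp_apply fst_conv)
  have "\<exists>h. strict_mono h \<and> map h (us (\<psi> j)) = us (\<psi> (Suc j))" for j
  proof -
    define u where "u = us (\<psi> j)"
    define u' where "u' = us (\<psi> (Suc j))"
    have lu: "length u = L" "length u' = L" unfolding u_def u'_def using len by simp_all
    have pp: "pat u = pat u'" unfolding u_def u'_def \<psi>_def using p1(2) by (metis comp_apply snd_conv)
    have mo: "s (\<psi>2 j) idx \<le> s (\<psi>2 (Suc j)) idx" if "idx \<in> I" for idx
      using p2(2) that by (simp add: mono_def)
    have "\<exists>h. strict_mono h \<and> map h u = u'"
    proof (rule shift_map)
      show "length u' = length u" using lu by simp
      show "\<forall>i<length u. \<forall>j<length u. (u!i < u!j) = (u'!i < u'!j)"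
      proof (intro allI impI)
        fix a b assume "a < length u" "b < length u"
        then have "(a,b) \<in> pat u \<longleftrightarrow> (a,b) \<in> pat u'" using pp by simp
        then show "(u!a < u!b) = (u'!a < u'!b)" using \<open>a < length u\<close> \<open>b < length u\<close> lu
          unfolding pat_def by simp
      qed
      show "\<forall>i<length u. u!i \<le> u'!i"
      proof (intro allI impI)
        fix a assume "a < length u"
        then have "Inl a \<in> I" unfolding I_def using lu by simp
        from mo[OF this] show "u!a \<le> u'!a" unfolding s_def u_def u'_def \<psi>_def by simp
      qed
      show "\<forall>i<length u. \<forall>j<length u. u!j - u!i \<le> u'!j - u'!i"
      proof (intro allI impI)
        fix a b assume "a < length u" "b < length u"
        then have "Inr (a,b) \<in> I" unfolding I_def using lu by simp
        from mo[OF this] show "u!b - u!a \<le> u'!b - u'!a" unfolding s_def u_def u'_def \<psi>_def by simp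
      qed
    qed
    then show ?thesis unfolding u_def u'_def .
  qed
  then show ?thesis using sm tagc by blast
qed



definition supp :: "('m \<Rightarrow> 'a::zero) \<Rightarrow> 'm set" where
  "supp x = {m. x m \<noteq> 0}"

definition monC :: "nat \<Rightarrow> nat \<Rightarrow> 'p set \<Rightarrow> (nat \<times> 'p list) set" where
  "monC n d C = {(c, f). c < n \<and> length f = d \<and> distinct f \<and> set f \<subseteq> C}"

definition mon_map :: "('p \<Rightarrow> 'p) \<Rightarrow> nat \<times> 'p list \<Rightarrow> nat \<times> 'p list" where
  "mon_map g m = (fst m, map g (snd m))"

definition HC :: "'p set \<Rightarrow> 'p set \<Rightarrow> 'p set \<Rightarrow> ('p \<Rightarrow> 'p) set" where
  "HC \<Psi> S C = {g. g permutes \<Psi> \<and> (\<forall>s\<in>S. g s = s) \<and> (\<forall>p. p \<notin> C \<longrightarrow> g p = p)}"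

lemma finite_monC: "finite C \<Longrightarrow> finite (monC n d C)"
proof -
  assume fC: "finite C"
  have "monC n d C \<subseteq> {..<n} \<times> {f. set f \<subseteq> C \<and> length f = d}" unfolding monC_def by auto
  moreover have "finite ({..<n} \<times> {f. set f \<subseteq> C \<and> length f = d})"
    using finite_lists_length_eq[OF fC] by simp
  ultimately show ?thesis using finite_subset by blast
qed

lemma transport:
  fixes ms :: "nat \<Rightarrow> nat \<times> 'p list"
  assumes cC: "countable C" and SC: "S \<subseteq> C" and fS: "finite S" and CP: "C \<subseteq> \<Psi>"
    and ms: "\<And>k. ms k \<in> monC n d C"
  shows "\<exists>\<psi>::nat\<Rightarrow>nat. strict_mono \<psi> \<and> (\<forall>j D. finite D \<longrightarrow> D \<subseteq> C \<longrightarrow>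
     (\<exists>g h. g \<in> HC \<Psi> S C \<and> strict_mono h \<and> mon_map g (ms (\<psi> j)) = ms (\<psi> (Suc j)) \<and>
        (\<forall>p\<in>D. to_nat_on C (g p) = h (to_nat_on C p))))"
proof (cases "finite C")
  case True
  obtain \<psi> :: "nat \<Rightarrow> nat" and v where p: "strict_mono \<psi>" "\<forall>k. ms (\<psi> k) = v"
    using subseq_const[of "monC n d C" ms] finite_monC[OF True] ms by blast
  have idH: "id \<in> HC \<Psi> S C" unfolding HC_def by simp
  have "strict_mono (id :: nat \<Rightarrow> nat)" by (simp add: strict_mono_def)
  moreover have "mon_map id (ms (\<psi> j)) = ms (\<psi> (Suc j))" for j using p(2) by (simp add: mon_map_def)
  ultimately show ?thesis using p(1) idH by fastforce
next
  case False
  define \<nu> where "\<nu> = to_nat_on C"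
  define \<mu> where "\<mu> = from_nat_into C"
  have nu_bij: "bij_betw \<nu> C UNIV" unfolding \<nu>_def using to_nat_on_infinite[OF cC False] .
  have mu_bij: "bij_betw \<mu> UNIV C" unfolding \<mu>_def using bij_betw_from_nat_into[OF cC False] .
  have mu_nu: "\<mu> (\<nu> p) = p" if "p \<in> C" for p unfolding \<mu>_def \<nu>_def using cC that by simp
  have nu_mu: "\<nu> (\<mu> k) = k" for k unfolding \<mu>_def \<nu>_def using cC False by simp
  obtain sl where sl: "set sl = S" using fS finite_list by blast
  define us where "us k = map \<nu> (snd (ms k) @ sl)" for k
  have lus: "length (us k) = d + length sl" for k using ms[of k] unfolding us_def monC_def by auto
  have tg: "fst (ms k) \<in> {..<n}" for k using ms[of k] unfolding monC_def by auto
  obtain \<psi> :: "nat \<Rightarrow> nat" where psi: "strict_mono \<psi>" "\<forall>j. fst (ms (\<psi> j)) = fst (ms (\<psi> 0))"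
      "\<forall>j. \<exists>h. strict_mono h \<and> map h (us (\<psi> j)) = us (\<psi> (Suc j))"
    using nat_list_transport[of us "d + length sl" "{..<n}" "\<lambda>k. fst (ms k)", OF lus _ tg] by auto
  have "\<exists>g h. g \<in> HC \<Psi> S C \<and> strict_mono h \<and> mon_map g (ms (\<psi> j)) = ms (\<psi> (Suc j)) \<and>
        (\<forall>p\<in>D. to_nat_on C (g p) = h (to_nat_on C p))" if D: "finite D" "D \<subseteq> C" for j D
  proof -
    obtain h where h: "strict_mono h" "map h (us (\<psi> j)) = us (\<psi> (Suc j))" using psi(3) by blast
    define f where "f = snd (ms (\<psi> j))"
    define f' where "f' = snd (ms (\<psi> (Suc j)))"
    have fC: "set f \<subseteq> C" "set f' \<subseteq> C" "length f = d" "length f' = d"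
      using ms[of "\<psi> j"] ms[of "\<psi> (Suc j)"] unfolding f_def f'_def monC_def by auto
    have hmap: "map h (map \<nu> f) = map \<nu> f'" "map h (map \<nu> sl) = map \<nu> sl"
      using h(2) fC(3,4) unfolding us_def f_def[symmetric] f'_def[symmetric] by auto
    define K where "K = \<nu> ` (D \<union> set f \<union> S)"
    have fK: "finite K" unfolding K_def using D(1) fS by simp
    have "inj_on h K" using h(1) strict_mono_imp_inj_on by blast
    then obtain \<pi> where pi: "\<pi> permutes (K \<union> h ` K)" "\<forall>x\<in>K. \<pi> x = h x"
      using perm_extend[OF fK] by blast
    have pib: "bij_betw \<pi> UNIV UNIV" using permutes_bij[OF pi(1)] by (simp add: bij_def bij_betw_def)
    define g where "g p = (if p \<in> C then \<mu> (\<pi> (\<nu> p)) else p)" for p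
    have gC: "bij_betw g C C"
    proof -
      have "bij_betw (\<mu> \<circ> \<pi> \<circ> \<nu>) C C"
        using bij_betw_trans[OF bij_betw_trans[OF nu_bij pib] mu_bij] by (simp add: comp_assoc)
      moreover have "bij_betw g C C = bij_betw (\<mu> \<circ> \<pi> \<circ> \<nu>) C C"
        by (rule bij_betw_cong) (simp add: g_def)
      ultimately show ?thesis by simp
    qed
    have "g permutes C" unfolding permutes_altdef using gC by (auto simp: g_def)
    then have gP: "g permutes \<Psi>" using permutes_subset CP by blast
    have gnu: "\<nu> (g p) = h (\<nu> p)" if "p \<in> D \<union> set f \<union> S" for p
    proof -
      have "p \<in> C" using that D(2) fC(1) SC by blast
      moreover have "\<nu> p \<in> K" unfolding K_def using that by blast
      ultimately show ?thesis unfolding g_def using pi(2) nu_mu by simp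
    qed
    have gS: "\<forall>s\<in>S. g s = s"
    proof
      fix s assume s: "s \<in> S"
      then have "\<nu> (g s) = h (\<nu> s)" using gnu by blast
      also have "h (\<nu> s) = \<nu> s"
      proof -
        have "\<forall>x\<in>set sl. h (\<nu> x) = \<nu> x" using hmap(2) by simp
        then show ?thesis using s sl by blast
      qed
      finally have "\<nu> (g s) = \<nu> s" .
      moreover have "g s \<in> C" "s \<in> C" using s SC gC by (auto simp: bij_betw_def)
      ultimately show "g s = s" using mu_nu by metis
    qed
    have gH: "g \<in> HC \<Psi> S C" unfolding HC_def using gP gS by (auto simp: g_def)
    have "map g f = f'"
    proof (rule nth_equalityI)
      show "length (map g f) = length f'" using fC by simp
      fix i assume "i < length (map g f)"
      then have i: "i < length f" by simp
      then have fi: "f ! i \<in> set f" by simp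
      have "\<nu> (g (f!i)) = h (\<nu> (f!i))" using gnu fi by blast
      also have "\<dots> = \<nu> (f'!i)"
      proof -
        have "map h (map \<nu> f) ! i = map \<nu> f' ! i" using hmap(1) by simp
        then show ?thesis using i fC by simp
      qed
      finally have "\<nu> (g (f!i)) = \<nu> (f'!i)" .
      moreover have "g (f!i) \<in> C" using fi fC gC by (auto simp: bij_betw_def)
      moreover have "f'!i \<in> C" using i fC nth_mem by (metis subsetD)
      ultimately show "map g f ! i = f' ! i" using mu_nu i by (metis nth_map)
    qed
    then have "mon_map g (ms (\<psi> j)) = ms (\<psi> (Suc j))"
      unfolding mon_map_def f_def f'_def using psi(2) by (metis prod.collapse)
    moreover have "\<forall>p\<in>D. to_nat_on C (g p) = h (to_nat_on C p)" using gnu unfolding \<nu>_def by blast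
    ultimately show ?thesis using gH h(1) by blast
  qed
  then show ?thesis using psi(1) by blast
qed



section \<open>Facts about the ring action\<close>

lemma act_facts:
  assumes "ring_aut_action \<Psi> act" "g \<in> Sym \<Psi>"
  shows "act g 0 = 0" "act g (a + b) = act g a + act g b" "act g (a * b) = act g a * act g b"
    "act g (- a) = - act g a" "bij (act g)" "act g 1 = 1" "act g (a - b) = act g a - act g b"
proof -
  have ad: "\<And>x y. act g (x + y) = act g x + act g y" using assms unfolding ring_aut_action_def by blast
  show "act g (a + b) = act g a + act g b" by (rule ad)
  show "act g (a * b) = act g a * act g b" using assms unfolding ring_aut_action_def by blast
  show "bij (act g)" "act g 1 = 1" using assms unfolding ring_aut_action_def by blast+
  show z: "act g 0 = 0" using ad[of 0 0] by simp
  have n: "act g (- x) = - act g x" for x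
  proof -
    have "act g x + act g (- x) = 0" using ad[of x "- x"] z by simp
    then show ?thesis by (simp add: eq_neg_iff_add_eq_0 add.commute)
  qed
  then show "act g (- a) = - act g a" .
  show "act g (a - b) = act g a - act g b" using ad[of a "- b"] n[of b] by simp
qed

lemma act_eq0_iff:
  assumes "ring_aut_action \<Psi> act" "g \<in> Sym \<Psi>"
  shows "act g a = 0 \<longleftrightarrow> a = 0"
proof -
  have "inj (act g)" using act_facts(5)[OF assms] bij_is_inj by blast
  then show ?thesis using act_facts(1)[OF assms] by (metis injD)
qed

lemma act_sum:
  assumes "ring_aut_action \<Psi> act" "g \<in> Sym \<Psi>"
  shows "act g (\<Sum>x\<in>F. f x) = (\<Sum>x\<in>F. act g (f x))"
  using sum_comp_morphism[of "act g" f F, OF act_facts(1,2)[OF assms]] by (simp add: comp_def)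

lemma act_comp:
  assumes "ring_aut_action \<Psi> act" "g \<in> Sym \<Psi>" "h \<in> Sym \<Psi>"
  shows "act (g \<circ> h) a = act g (act h a)"
  using assms unfolding ring_aut_action_def by blast

section \<open>Ideals\<close>

lemma left_ideal_sum:
  assumes "left_ideal I" "F \<subseteq> I"
  shows "(\<Sum>f\<in>F. c f * f) \<in> I"
proof (cases "finite F")
  case True
  then show ?thesis using assms(2)
  proof (induction F rule: finite_induct)
    case empty then show ?case using assms(1) unfolding left_ideal_def by simp
  next
    case (insert x F)
    then have "c x * x \<in> I" "(\<Sum>f\<in>F. c f * f) \<in> I" using assms(1) unfolding left_ideal_def by auto
    then show ?case using insert(1,2) assms(1) unfolding left_ideal_def by simp
  qed
next
  case False then show ?thesis using assms(1) unfolding left_ideal_def by simp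
qed

lemma left_ideal_sum2:
  assumes "left_ideal I" "\<And>f. f \<in> F \<Longrightarrow> e f \<in> I"
  shows "(\<Sum>f\<in>F. c f * e f) \<in> I"
proof (cases "finite F")
  case True
  then show ?thesis using assms(2)
  proof (induction F rule: finite_induct)
    case empty then show ?case using assms(1) unfolding left_ideal_def by simp
  next
    case (insert x F)
    then have "c x * e x \<in> I" "(\<Sum>f\<in>F. c f * e f) \<in> I" using assms(1) unfolding left_ideal_def by auto
    then show ?case using insert(1,2) assms(1) unfolding left_ideal_def by simp
  qed
next
  case False then show ?thesis using assms(1) unfolding left_ideal_def by simp
qed

lemma noeth_chain:
  fixes P :: "nat \<Rightarrow> 'a::{ring,monoid_mult} set"
  assumes noeth: "left_noetherian TYPE('a)" and li: "\<And>j. left_ideal (P j)"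
    and mono: "\<And>j. P j \<subseteq> P (Suc j)" and strict: "\<And>j. \<exists>a\<in>P (Suc j). a \<notin> P j"
  shows False
proof -
  define Q where "Q = (\<Union>j. P j)"
  have monole: "P i \<subseteq> P j" if "i \<le> j" for i j using lift_Suc_mono_le[of P, OF mono that] .
  have "left_ideal Q"
    unfolding left_ideal_def
  proof (intro conjI ballI allI)
    show "0 \<in> Q" using li[of 0] unfolding Q_def left_ideal_def by blast
  next
    fix x y assume "x \<in> Q" "y \<in> Q"
    then obtain i j where "x \<in> P i" "y \<in> P j" unfolding Q_def by blast
    then have "x \<in> P (max i j)" "y \<in> P (max i j)" using monole by (meson max.cobounded1 max.cobounded2 subsetD)+
    then show "x + y \<in> Q" using li[of "max i j"] unfolding Q_def left_ideal_def by blast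
  next
    fix x assume "x \<in> Q"
    then obtain i where "x \<in> P i" unfolding Q_def by blast
    then show "- x \<in> Q" using li[of i] unfolding Q_def left_ideal_def by blast
  next
    fix a x assume "x \<in> Q"
    then obtain i where "x \<in> P i" unfolding Q_def by blast
    then show "a * x \<in> Q" using li[of i] unfolding Q_def left_ideal_def by blast
  qed
  then have "\<exists>F. finite F \<and> F \<subseteq> Q \<and> Q = {\<Sum>f\<in>F. c f * f | c. True}"
    using noeth[unfolded left_noetherian_def, rule_format] by simp
  then obtain F where F: "finite F" "F \<subseteq> Q" "Q = {\<Sum>f\<in>F. c f * f | c. True}"
    by (elim exE conjE)
  have "\<forall>f\<in>F. \<exists>j. f \<in> P j" using F(2) unfolding Q_def by blast
  from bchoice[OF this] obtain ix where ix: "\<forall>f\<in>F. f \<in> P (ix f)" by (elim exE)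
  define J where "J = Max (insert 0 (ix ` F))"
  have "F \<subseteq> P J"
  proof
    fix f assume "f \<in> F"
    then have "ix f \<le> J" unfolding J_def using F(1) by (intro Max_ge) auto
    then show "f \<in> P J" using ix \<open>f \<in> F\<close> monole by blast
  qed
  then have "Q \<subseteq> P J" using F(3) left_ideal_sum[OF li[of J]] by blast
  moreover obtain a where "a \<in> P (Suc J)" "a \<notin> P J" using strict by blast
  ultimately show False unfolding Q_def by blast
qed

section \<open>Keys and orders\<close>

definition key :: "('p \<Rightarrow> nat) \<Rightarrow> nat \<times> 'p list \<Rightarrow> nat list" where
  "key \<nu> m = fst m # map \<nu> (snd m)"

lemma map_strict_mono_less:
  fixes h :: "nat \<Rightarrow> nat"
  assumes "strict_mono h"
  shows "(map h xs < map h ys) = (xs < ys)"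
proof (induction xs arbitrary: ys)
  case Nil then show ?case by (cases ys) simp_all
next
  case (Cons a xs)
  then show ?case
  proof (cases ys)
    case Nil then show ?thesis by simp
  next
    case (Cons b ys')
    have "(h a < h b) = (a < b)" "(h a = h b) = (a = b)"
      using assms strict_mono_less strict_mono_eq by blast+
    then show ?thesis using Cons.IH Cons by simp
  qed
qed

lemma map_strict_mono_le:
  fixes h :: "nat \<Rightarrow> nat"
  assumes "strict_mono h"
  shows "(map h xs \<le> map h ys) = (xs \<le> ys)"
proof -
  have "inj h" using assms strict_mono_imp_inj_on by blast
  then have "(map h xs = map h ys) = (xs = ys)" by (simp add: inj_map_eq_map)
  then show ?thesis using map_strict_mono_less[OF assms] by (simp add: list_le_def)
qed

lemma key_transfer:
  fixes h :: "nat \<Rightarrow> nat"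
  assumes "strict_mono h" "\<forall>p\<in>D. \<nu> (g p) = h (\<nu> p)" "set (snd m1) \<subseteq> D" "set (snd m2) \<subseteq> D"
  shows "(key \<nu> (mon_map g m1) \<le> key \<nu> (mon_map g m2)) = (key \<nu> m1 \<le> key \<nu> m2)"
proof -
  have e1: "key \<nu> (mon_map g m1) = fst m1 # map h (map \<nu> (snd m1))"
    using assms(2,3) unfolding key_def mon_map_def by auto
  have e2: "key \<nu> (mon_map g m2) = fst m2 # map h (map \<nu> (snd m2))"
    using assms(2,4) unfolding key_def mon_map_def by auto
  have "(map h (map \<nu> (snd m1)) < map h (map \<nu> (snd m2))) = (map \<nu> (snd m1) < map \<nu> (snd m2))"
    by (rule map_strict_mono_less[OF assms(1)])
  moreover have "(map h (map \<nu> (snd m1)) = map h (map \<nu> (snd m2))) = (map \<nu> (snd m1) = map \<nu> (snd m2))"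
    using assms(1) strict_mono_imp_inj_on inj_map_eq_map by blast
  moreover have "key \<nu> m1 = fst m1 # map \<nu> (snd m1)" "key \<nu> m2 = fst m2 # map \<nu> (snd m2)"
    unfolding key_def by simp_all
  ultimately show ?thesis unfolding e1 e2 list_le_def by auto
qed

lemma wf_len_less: "wf {(xs, ys::nat list). length xs = L \<and> length ys = L \<and> xs < ys}"
proof -
  have "{(xs, ys::nat list). length xs = L \<and> length ys = L \<and> xs < ys} \<subseteq> lex {(u, v). u < v}"
    by (auto simp: lexord_lex list_less_def)
  moreover have "wf (lex {(u, v::nat). u < v})" using wf_less by (rule wf_lex)
  ultimately show ?thesis using wf_subset by blast
qed



definition mact :: "(('p \<Rightarrow> 'p) \<Rightarrow> 'a \<Rightarrow> 'a) \<Rightarrow> ('p \<Rightarrow> 'p) \<Rightarrow> (nat \<times> 'p list \<Rightarrow> 'a) \<Rightarrow> (nat \<times> 'p list \<Rightarrow> 'a)" where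
  "mact act g x = (\<lambda>m. act g (x (mon_map (inv g) m)))"

definition VC :: "nat \<Rightarrow> nat \<Rightarrow> 'p set \<Rightarrow> (nat \<times> 'p list \<Rightarrow> 'a::zero) set" where
  "VC n d C = {x. finite (supp x) \<and> supp x \<subseteq> monC n d C}"

definition below :: "('p \<Rightarrow> nat) \<Rightarrow> (nat \<times> 'p list \<Rightarrow> 'a::zero) \<Rightarrow> nat \<times> 'p list \<Rightarrow> bool" where
  "below \<nu> x m = (\<forall>m'\<in>supp x. key \<nu> m' \<le> key \<nu> m)"

definition LI :: "('p \<Rightarrow> nat) \<Rightarrow> (nat \<times> 'p list \<Rightarrow> 'a::zero) set \<Rightarrow> nat \<times> 'p list \<Rightarrow> 'a set" where
  "LI \<nu> N m = {a. \<exists>z\<in>N. below \<nu> z m \<and> z m = a}"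

definition closedN :: "(('p \<Rightarrow> 'p) \<Rightarrow> 'a \<Rightarrow> 'a) \<Rightarrow> 'p set \<Rightarrow> 'p set \<Rightarrow> 'p set \<Rightarrow> nat \<Rightarrow> nat \<Rightarrow>
    (nat \<times> 'p list \<Rightarrow> 'a::{ring,monoid_mult}) set \<Rightarrow> bool" where
  "closedN act \<Psi> S C n d N \<longleftrightarrow> N \<subseteq> VC n d C \<and> (\<lambda>m. 0) \<in> N \<and>
     (\<forall>x\<in>N. \<forall>y\<in>N. (\<lambda>m. x m + y m) \<in> N) \<and> (\<forall>x\<in>N. (\<lambda>m. - x m) \<in> N) \<and>
     (\<forall>a. \<forall>x\<in>N. (\<lambda>m. a * x m) \<in> N) \<and> (\<forall>g\<in>HC \<Psi> S C. \<forall>x\<in>N. mact act g x \<in> N)"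

lemma HC_Sym: "g \<in> HC \<Psi> S C \<Longrightarrow> g \<in> Sym \<Psi>"
  unfolding HC_def Sym_def by blast

lemma mon_map_inv:
  assumes "g \<in> Sym \<Psi>"
  shows "mon_map (inv g) (mon_map g m) = m" "mon_map g (mon_map (inv g) m) = m"
proof -
  have p: "g permutes \<Psi>" using assms unfolding Sym_def by blast
  have "map (inv g) (map g xs) = xs" "map g (map (inv g) xs) = xs" for xs
    using permutes_inverses[OF p] by (simp_all add: map_idI)
  then show "mon_map (inv g) (mon_map g m) = m" "mon_map g (mon_map (inv g) m) = m"
    unfolding mon_map_def by simp_all
qed

lemma mact_app:
  assumes "g \<in> Sym \<Psi>"
  shows "mact act g x (mon_map g m) = act g (x m)"
  unfolding mact_def using mon_map_inv(1)[OF assms] by simp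

lemma supp_mact:
  assumes "ring_aut_action \<Psi> act" "g \<in> Sym \<Psi>"
  shows "supp (mact act g x) = mon_map g ` supp x"
proof
  show "supp (mact act g x) \<subseteq> mon_map g ` supp x"
  proof
    fix m assume "m \<in> supp (mact act g x)"
    then have "x (mon_map (inv g) m) \<noteq> 0"
      unfolding supp_def mact_def using act_facts(1)[OF assms] by auto
    then have "mon_map (inv g) m \<in> supp x" unfolding supp_def by simp
    then show "m \<in> mon_map g ` supp x" using mon_map_inv(2)[OF assms(2)] by (metis image_eqI)
  qed
next
  show "mon_map g ` supp x \<subseteq> supp (mact act g x)"
  proof
    fix m assume "m \<in> mon_map g ` supp x"
    then obtain m0 where m0: "m0 \<in> supp x" "m = mon_map g m0" by blast
    then have "act g (x m0) \<noteq> 0" unfolding supp_def using act_eq0_iff[OF assms] by simp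
    then show "m \<in> supp (mact act g x)" unfolding supp_def using mact_app[OF assms(2), of act x m0] m0(2) by simp
  qed
qed

lemma LI_ideal:
  assumes "closedN act \<Psi> S C n d N"
  shows "left_ideal (LI \<nu> N m)"
  unfolding left_ideal_def
proof (intro conjI ballI allI)
  have cl: "(\<lambda>m. 0) \<in> N" "\<forall>x\<in>N. \<forall>y\<in>N. (\<lambda>m. x m + y m) \<in> N" "\<forall>x\<in>N. (\<lambda>m. - x m) \<in> N"
     "\<forall>a. \<forall>x\<in>N. (\<lambda>m. a * x m) \<in> N"
    using assms unfolding closedN_def by blast+
  have "below \<nu> (\<lambda>m. 0) m" unfolding below_def supp_def by simp
  then show "0 \<in> LI \<nu> N m" unfolding LI_def using cl(1) by force
  fix x y assume "x \<in> LI \<nu> N m" "y \<in> LI \<nu> N m"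
  then obtain zx zy where z: "zx \<in> N" "below \<nu> zx m" "zx m = x" "zy \<in> N" "below \<nu> zy m" "zy m = y"
    unfolding LI_def by blast
  have "below \<nu> (\<lambda>m. zx m + zy m) m" using z(2,5) unfolding below_def supp_def by force
  moreover have "(\<lambda>m. zx m + zy m) \<in> N" using cl(2) z(1,4) by blast
  ultimately show "x + y \<in> LI \<nu> N m" unfolding LI_def using z(3,6) by force
next
  have cl: "\<forall>x\<in>N. (\<lambda>m. - x m) \<in> N" using assms unfolding closedN_def by blast
  fix x assume "x \<in> LI \<nu> N m"
  then obtain zx where z: "zx \<in> N" "below \<nu> zx m" "zx m = x" unfolding LI_def by blast
  have "below \<nu> (\<lambda>m. - zx m) m" using z(2) unfolding below_def supp_def by force
  moreover have "(\<lambda>m. - zx m) \<in> N" using cl z(1) by blast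
  ultimately show "- x \<in> LI \<nu> N m" unfolding LI_def using z(3) by force
next
  have cl: "\<forall>a. \<forall>x\<in>N. (\<lambda>m. a * x m) \<in> N" using assms unfolding closedN_def by blast
  fix a x assume "x \<in> LI \<nu> N m"
  then obtain zx where z: "zx \<in> N" "below \<nu> zx m" "zx m = x" unfolding LI_def by blast
  have "below \<nu> (\<lambda>m. a * zx m) m" using z(2) unfolding below_def supp_def by force
  moreover have "(\<lambda>m. a * zx m) \<in> N" using cl z(1) by blast
  ultimately show "a * x \<in> LI \<nu> N m" unfolding LI_def using z(3) by force
qed

lemma LI_mono: "N \<subseteq> N' \<Longrightarrow> LI \<nu> N m \<subseteq> LI \<nu> N' m"
  unfolding LI_def by blast

lemma key_inj:
  assumes "countable C" "m1 \<in> monC n d C" "m2 \<in> monC n d C" "key (to_nat_on C) m1 = key (to_nat_on C) m2"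
  shows "m1 = m2"
proof -
  have i: "inj_on (to_nat_on C) C" using assms(1) by blast
  have s: "set (snd m1) \<subseteq> C" "set (snd m2) \<subseteq> C" using assms(2,3) unfolding monC_def by auto
  have e: "fst m1 = fst m2" "map (to_nat_on C) (snd m1) = map (to_nat_on C) (snd m2)"
    using assms(4) unfolding key_def by simp_all
  have "inj_on (to_nat_on C) (set (snd m1) \<union> set (snd m2))"
    by (rule inj_on_subset[OF i]) (use s in blast)
  then have "snd m1 = snd m2" using e(2) inj_on_map_eq_map by metis
  then show ?thesis using e(1) by (simp add: prod_eq_iff)
qed

lemma length_key: "m \<in> monC n d C \<Longrightarrow> length (key \<nu> m) = Suc d"
  unfolding monC_def key_def by auto

lemma LI_transfer:
  assumes ract: "ring_aut_action \<Psi> act" and cl: "closedN act \<Psi> S C n d N" and gH: "g \<in> HC \<Psi> S C"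
    and h: "strict_mono h" and gh: "\<forall>p\<in>D. \<nu> (g p) = h (\<nu> p)"
    and z: "z \<in> N" "below \<nu> z m" and mD: "set (snd m) \<subseteq> D" and zD: "\<forall>m'\<in>supp z. set (snd m') \<subseteq> D"
  shows "act g (z m) \<in> LI \<nu> N (mon_map g m)"
proof -
  have gS: "g \<in> Sym \<Psi>" using HC_Sym[OF gH] .
  have "mact act g z \<in> N" using cl gH z(1) unfolding closedN_def by blast
  moreover have "below \<nu> (mact act g z) (mon_map g m)"
    unfolding below_def
  proof
    fix m'' assume "m'' \<in> supp (mact act g z)"
    then obtain m' where m': "m' \<in> supp z" "m'' = mon_map g m'" using supp_mact[OF ract gS] by blast
    have "key \<nu> m' \<le> key \<nu> m" using z(2) m'(1) unfolding below_def by blast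
    then show "key \<nu> m'' \<le> key \<nu> (mon_map g m)"
      using key_transfer[OF h gh zD[rule_format, OF m'(1)] mD] m'(2) by simp
  qed
  moreover have "mact act g z (mon_map g m) = act g (z m)" using mact_app[OF gS, of act z m] .
  ultimately show ?thesis unfolding LI_def by blast
qed



lemma reduce:
  fixes N N' :: "(nat \<times> 'p list \<Rightarrow> 'a::{ring,monoid_mult}) set"
  assumes cC: "countable C" and cl: "closedN act \<Psi> S C n d N" and cl': "closedN act \<Psi> S C n d N'"
    and sub: "N \<subseteq> N'" and y: "y \<in> N'" "y \<notin> N"
  shows "\<exists>m\<in>monC n d C. \<exists>a. a \<in> LI (to_nat_on C) N' m \<and> a \<notin> LI (to_nat_on C) N m"
proof -
  define \<nu> where "\<nu> = to_nat_on C"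
  define R where "R = {(xs, ys::nat list). length xs = Suc d \<and> length ys = Suc d \<and> xs < ys}"
  have wfR: "wf R" unfolding R_def by (rule wf_len_less)
  have V: "N \<subseteq> VC n d C" "N' \<subseteq> VC n d C" using cl cl' unfolding closedN_def by blast+
  have z0: "(\<lambda>m. 0) \<in> N" using cl unfolding closedN_def by blast
  have addN: "\<forall>x\<in>N. \<forall>y\<in>N. (\<lambda>m. x m + y m) \<in> N" using cl unfolding closedN_def by blast
  have addN': "\<forall>x\<in>N'. \<forall>y\<in>N'. (\<lambda>m. x m + y m) \<in> N'" using cl' unfolding closedN_def by blast
  have negN: "\<forall>x\<in>N. (\<lambda>m. - x m) \<in> N" using cl unfolding closedN_def by blast
  have "\<forall>y. y \<in> N' \<longrightarrow> y \<notin> N \<longrightarrow> Max (key \<nu> ` supp y) = k \<longrightarrow>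
          (\<exists>m\<in>monC n d C. \<exists>a. a \<in> LI \<nu> N' m \<and> a \<notin> LI \<nu> N m)" for k
  proof (induction k rule: wf_induct[OF wfR])
    case (1 k)
    show ?case
    proof (intro allI impI)
      fix y assume y: "y \<in> N'" "y \<notin> N" and k: "Max (key \<nu> ` supp y) = k"
      have fy: "finite (supp y)" "supp y \<subseteq> monC n d C" using y(1) V(2) unfolding VC_def by blast+
      have ne: "supp y \<noteq> {}"
      proof
        assume "supp y = {}"
        then have "y = (\<lambda>m. 0)" unfolding supp_def by auto
        then show False using y(2) z0 by simp
      qed
      have "k \<in> key \<nu> ` supp y" unfolding k[symmetric] using fy(1) ne by simp
      then obtain m where m: "m \<in> supp y" "key \<nu> m = k" by blast
      have mC: "m \<in> monC n d C" using m(1) fy(2) by blast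
      have yb: "below \<nu> y m" unfolding below_def
      proof
        fix m' assume "m' \<in> supp y"
        then have "key \<nu> m' \<le> Max (key \<nu> ` supp y)" using fy(1) by (intro Max_ge) auto
        then show "key \<nu> m' \<le> key \<nu> m" using k m(2) by simp
      qed
      show "\<exists>m\<in>monC n d C. \<exists>a. a \<in> LI \<nu> N' m \<and> a \<notin> LI \<nu> N m"
      proof (cases "y m \<in> LI \<nu> N m")
        case False
        moreover have "y m \<in> LI \<nu> N' m" unfolding LI_def using y(1) yb by blast
        ultimately show ?thesis using mC by blast
      next
        case True
        then obtain z where z: "z \<in> N" "below \<nu> z m" "z m = y m" unfolding LI_def by blast
        define y2 where "y2 = (\<lambda>m. y m + (- z m))"
        have zN': "z \<in> N'" "(\<lambda>m. - z m) \<in> N'" using z(1) sub negN by blast+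
        have y2N': "y2 \<in> N'" unfolding y2_def using addN'[rule_format, OF y(1) zN'(2)] by simp
        have y2N: "y2 \<notin> N"
        proof
          assume "y2 \<in> N"
          then have "(\<lambda>m'. y2 m' + z m') \<in> N" using addN[rule_format, OF _ z(1)] by blast
          moreover have "(\<lambda>m'. y2 m' + z m') = y" unfolding y2_def by (simp add: fun_eq_iff)
          ultimately show False using y(2) by simp
        qed
        have fz: "finite (supp z)" "supp z \<subseteq> monC n d C" using z(1) V(1) unfolding VC_def by blast+
        have sy2: "supp y2 \<subseteq> supp y \<union> supp z" unfolding y2_def supp_def by auto
        have fy2: "finite (supp y2)" using sy2 fy(1) fz(1) finite_subset by blast
        have ne2: "supp y2 \<noteq> {}"
        proof
          assume "supp y2 = {}"
          then have "y2 = (\<lambda>m. 0)" unfolding supp_def by auto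
          then show False using y2N z0 by simp
        qed
        have lt: "key \<nu> m' < key \<nu> m" if m': "m' \<in> supp y2" for m'
        proof -
          have "key \<nu> m' \<le> key \<nu> m"
            using sy2 m' yb z(2) unfolding below_def by blast
          moreover have "m' \<noteq> m" using m' z(3) unfolding supp_def y2_def by auto
          moreover have "m' \<in> monC n d C" using m' sy2 fy(2) fz(2) by blast
          ultimately have "key \<nu> m' \<noteq> key \<nu> m" using key_inj[OF cC _ mC] unfolding \<nu>_def by blast
          with \<open>key \<nu> m' \<le> key \<nu> m\<close> show ?thesis by simp
        qed
        define k2 where "k2 = Max (key \<nu> ` supp y2)"
        have "k2 \<in> key \<nu> ` supp y2" unfolding k2_def using fy2 ne2 by simp
        then obtain m2 where m2: "m2 \<in> supp y2" "key \<nu> m2 = k2" by blast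
        have "k2 < k" using lt[OF m2(1)] m2(2) m(2) by simp
        moreover have m2C: "m2 \<in> monC n d C" using m2(1) sy2 fy(2) fz(2) by blast
        moreover have "length k2 = Suc d" using length_key[OF m2C, of \<nu>] m2(2) by simp
        moreover have "length k = Suc d" using length_key[OF mC, of \<nu>] m(2) by simp
        ultimately have kR: "(k2, k) \<in> R" unfolding R_def by simp
        show ?thesis using 1[rule_format, OF kR y2N' y2N k2_def[symmetric]] .
      qed
    qed
  qed
  then show ?thesis using y unfolding \<nu>_def by blast
qed



lemma monC_D:
  assumes "m \<in> monC n d C"
  shows "fst m < n" "length (snd m) = d" "distinct (snd m)" "set (snd m) \<subseteq> C"
  using assms unfolding monC_def by (cases m, simp)+

lemma core:
  fixes act :: "('p \<Rightarrow> 'p) \<Rightarrow> 'a::{ring,monoid_mult} \<Rightarrow> 'a"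
    and Ns :: "nat \<Rightarrow> (nat \<times> 'p list \<Rightarrow> 'a) set"
  assumes noeth: "left_noetherian TYPE('a)" and ract: "ring_aut_action \<Psi> act"
    and cC: "countable C" and SC: "S \<subseteq> C" and fS: "finite S" and CP: "C \<subseteq> \<Psi>"
    and cl: "\<And>k. closedN act \<Psi> S C n d (Ns k)"
    and mono: "\<And>k. Ns k \<subseteq> Ns (Suc k)"
    and strict: "\<And>k. \<exists>x\<in>Ns (Suc k). x \<notin> Ns k"
  shows False
proof -
  define \<nu> where "\<nu> = to_nat_on C"
  have monole: "Ns i \<subseteq> Ns j" if "i \<le> j" for i j using lift_Suc_mono_le[of Ns, OF mono that] .
  define pa where "pa k = (SOME p. fst p \<in> monC n d C \<and> snd p \<in> LI \<nu> (Ns (Suc k)) (fst p) \<and>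
       snd p \<notin> LI \<nu> (Ns k) (fst p))" for k
  have pa: "fst (pa k) \<in> monC n d C \<and> snd (pa k) \<in> LI \<nu> (Ns (Suc k)) (fst (pa k)) \<and>
       snd (pa k) \<notin> LI \<nu> (Ns k) (fst (pa k))" for k
  proof -
    obtain x where "x \<in> Ns (Suc k)" "x \<notin> Ns k" using strict by blast
    then obtain m a where "m \<in> monC n d C" "a \<in> LI \<nu> (Ns (Suc k)) m" "a \<notin> LI \<nu> (Ns k) m"
      using reduce[OF cC cl[of k] cl[of "Suc k"] mono[of k]] unfolding \<nu>_def by blast
    then have "fst (m,a) \<in> monC n d C \<and> snd (m,a) \<in> LI \<nu> (Ns (Suc k)) (fst (m,a)) \<and>
       snd (m,a) \<notin> LI \<nu> (Ns k) (fst (m,a))" by simp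
    then show ?thesis unfolding pa_def by (rule someI)
  qed
  define ms where "ms k = fst (pa k)" for k
  define as where "as k = snd (pa k)" for k
  have msC: "ms k \<in> monC n d C" for k using pa unfolding ms_def by blast
  have asin: "as k \<in> LI \<nu> (Ns (Suc k)) (ms k)" for k using pa unfolding ms_def as_def by blast
  have asout: "as k \<notin> LI \<nu> (Ns k) (ms k)" for k using pa unfolding ms_def as_def by blast
  define Q where "Q \<psi> = (\<forall>j D. finite D \<longrightarrow> D \<subseteq> C \<longrightarrow>
     (\<exists>g h. g \<in> HC \<Psi> S C \<and> strict_mono h \<and> mon_map g (ms (\<psi> j)) = ms (\<psi> (Suc j)) \<and>
        (\<forall>p\<in>D. to_nat_on C (g p) = h (to_nat_on C p))))" for \<psi> :: "nat \<Rightarrow> nat"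
  have "\<exists>\<psi>::nat\<Rightarrow>nat. strict_mono \<psi> \<and> Q \<psi>" unfolding Q_def by (rule transport[OF cC SC fS CP msC])
  then obtain \<psi> :: "nat \<Rightarrow> nat" where psi1: "strict_mono \<psi>" and "Q \<psi>" by blast
  then have psi2: "\<forall>j D. finite D \<longrightarrow> D \<subseteq> C \<longrightarrow>
     (\<exists>g h. g \<in> HC \<Psi> S C \<and> strict_mono h \<and> mon_map g (ms (\<psi> j)) = ms (\<psi> (Suc j)) \<and>
        (\<forall>p\<in>D. to_nat_on C (g p) = h (to_nat_on C p)))" unfolding Q_def by blast
  have psiS: "Suc (\<psi> j) \<le> \<psi> (Suc j)" for j using strict_monoD[OF psi1, of j "Suc j"] by simp
  define J where "J j = LI \<nu> (Ns (Suc (\<psi> j))) (ms (\<psi> j))" for j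
  have Jid: "left_ideal (J j)" for j unfolding J_def by (rule LI_ideal[OF cl])
  define Fs where "Fs j = (SOME F. finite F \<and> F \<subseteq> J j \<and> J j = {\<Sum>f\<in>F. c f * f | c. True})" for j
  have Fs: "finite (Fs j) \<and> Fs j \<subseteq> J j \<and> J j = {\<Sum>f\<in>Fs j. c f * f | c. True}" for j
  proof -
    have "\<exists>F. finite F \<and> F \<subseteq> J j \<and> J j = {\<Sum>f\<in>F. c f * f | c. True}"
      using noeth[unfolded left_noetherian_def, rule_format, OF Jid] .
    then show ?thesis unfolding Fs_def by (rule someI_ex)
  qed
  define zw where "zw j b = (SOME z. z \<in> Ns (Suc (\<psi> j)) \<and> below \<nu> z (ms (\<psi> j)) \<and> z (ms (\<psi> j)) = b)" for j b
  have zw: "zw j b \<in> Ns (Suc (\<psi> j)) \<and> below \<nu> (zw j b) (ms (\<psi> j)) \<and> zw j b (ms (\<psi> j)) = b"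
    if "b \<in> Fs j" for j b
  proof -
    have "b \<in> J j" using that Fs by blast
    then have "\<exists>z. z \<in> Ns (Suc (\<psi> j)) \<and> below \<nu> z (ms (\<psi> j)) \<and> z (ms (\<psi> j)) = b"
      unfolding J_def LI_def by blast
    then show ?thesis unfolding zw_def by (rule someI_ex)
  qed
  define D where "D j = set (snd (ms (\<psi> j))) \<union> (\<Union>b\<in>Fs j. \<Union>m'\<in>supp (zw j b). set (snd m'))" for j
  have zV: "zw j b \<in> VC n d C" if "b \<in> Fs j" for j b
    using zw[OF that] cl[of "Suc (\<psi> j)"] unfolding closedN_def by blast
  have fD: "finite (D j)" for j
  proof -
    have "finite (supp (zw j b))" if "b \<in> Fs j" for b using zV[OF that] unfolding VC_def by blast
    then show ?thesis unfolding D_def using Fs by auto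
  qed
  have DC: "D j \<subseteq> C" for j
  proof -
    have "set (snd (ms (\<psi> j))) \<subseteq> C" using monC_D(4)[OF msC] .
    moreover have "set (snd m') \<subseteq> C" if "b \<in> Fs j" "m' \<in> supp (zw j b)" for b m'
      using zV[OF that(1)] that(2) monC_D(4) unfolding VC_def by blast
    ultimately show ?thesis unfolding D_def by blast
  qed
  define gh where "gh j = (SOME gh. fst gh \<in> HC \<Psi> S C \<and> strict_mono (snd gh) \<and>
      mon_map (fst gh) (ms (\<psi> j)) = ms (\<psi> (Suc j)) \<and> (\<forall>p\<in>D j. \<nu> (fst gh p) = snd gh (\<nu> p)))" for j
  have gh: "fst (gh j) \<in> HC \<Psi> S C \<and> strict_mono (snd (gh j)) \<and>
      mon_map (fst (gh j)) (ms (\<psi> j)) = ms (\<psi> (Suc j)) \<and> (\<forall>p\<in>D j. \<nu> (fst (gh j) p) = snd (gh j) (\<nu> p))" for j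
  proof -
    obtain g h where "g \<in> HC \<Psi> S C" "strict_mono h" "mon_map g (ms (\<psi> j)) = ms (\<psi> (Suc j))"
        "\<forall>p\<in>D j. \<nu> (g p) = h (\<nu> p)"
      using psi2[rule_format, OF fD DC] unfolding \<nu>_def by blast
    then have "fst (g,h) \<in> HC \<Psi> S C \<and> strict_mono (snd (g,h)) \<and>
      mon_map (fst (g,h)) (ms (\<psi> j)) = ms (\<psi> (Suc j)) \<and> (\<forall>p\<in>D j. \<nu> (fst (g,h) p) = snd (g,h) (\<nu> p))"
      by simp
    then show ?thesis unfolding gh_def by (rule someI)
  qed
  define gs where "gs j = fst (gh j)" for j
  have gsH: "gs j \<in> HC \<Psi> S C" for j using gh unfolding gs_def by blast
  have gsS: "gs j \<in> Sym \<Psi>" for j using HC_Sym[OF gsH] .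
  have step: "act (gs j) a \<in> LI \<nu> (Ns (\<psi> (Suc j))) (ms (\<psi> (Suc j)))" if a: "a \<in> J j" for j a
  proof -
    obtain c where c: "a = (\<Sum>f\<in>Fs j. c f * f)" using a Fs by blast
    have each: "act (gs j) b \<in> LI \<nu> (Ns (\<psi> (Suc j))) (ms (\<psi> (Suc j)))" if b: "b \<in> Fs j" for b
    proof -
      have z1: "zw j b \<in> Ns (\<psi> (Suc j))" using zw[OF b] monole[OF psiS] by blast
      have z2: "below \<nu> (zw j b) (ms (\<psi> j))" using zw[OF b] by blast
      have mD: "set (snd (ms (\<psi> j))) \<subseteq> D j" unfolding D_def by blast
      have zD: "\<forall>m'\<in>supp (zw j b). set (snd m') \<subseteq> D j" unfolding D_def using b by blast
      have "act (gs j) (zw j b (ms (\<psi> j))) \<in> LI \<nu> (Ns (\<psi> (Suc j))) (mon_map (gs j) (ms (\<psi> j)))"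
        using LI_transfer[OF ract cl gsH _ _ z1 z2 mD zD] gh unfolding gs_def by blast
      moreover have "mon_map (gs j) (ms (\<psi> j)) = ms (\<psi> (Suc j))" using gh unfolding gs_def by blast
      moreover have "zw j b (ms (\<psi> j)) = b" using zw[OF b] by blast
      ultimately show ?thesis by simp
    qed
    have "act (gs j) a = (\<Sum>f\<in>Fs j. act (gs j) (c f) * act (gs j) f)"
      unfolding c by (simp add: act_sum[OF ract gsS[of j]] act_facts(3)[OF ract gsS[of j]])
    also have "\<dots> \<in> LI \<nu> (Ns (\<psi> (Suc j))) (ms (\<psi> (Suc j)))"
      by (rule left_ideal_sum2[OF LI_ideal[OF cl] each])
    finally show ?thesis .
  qed
  define \<gamma> where "\<gamma> = rec_nat id (\<lambda>j r. gs j \<circ> r)"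
  have \<gamma>0: "\<gamma> 0 = id" and \<gamma>S: "\<gamma> (Suc j) = gs j \<circ> \<gamma> j" for j by (simp_all add: \<gamma>_def)
  have \<gamma>Sym: "\<gamma> j \<in> Sym \<Psi>" for j
  proof (induction j)
    case 0 then show ?case unfolding \<gamma>0 Sym_def using permutes_id[of \<Psi>] by blast
  next
    case (Suc j)
    then have "\<gamma> j permutes \<Psi>" "gs j permutes \<Psi>" using gsS[of j] unfolding Sym_def by blast+
    then have "gs j \<circ> \<gamma> j permutes \<Psi>" by (rule permutes_compose)
    then show ?case unfolding \<gamma>S Sym_def by blast
  qed
  define P where "P j = {a. act (\<gamma> j) a \<in> J j}" for j
  have Pid: "left_ideal (P j)" for j
    unfolding left_ideal_def
  proof (intro conjI ballI allI)
    have J: "0 \<in> J j" "\<And>x y. x \<in> J j \<Longrightarrow> y \<in> J j \<Longrightarrow> x + y \<in> J j" "\<And>x. x \<in> J j \<Longrightarrow> - x \<in> J j"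
      "\<And>a x. x \<in> J j \<Longrightarrow> a * x \<in> J j"
      using Jid[of j] unfolding left_ideal_def by blast+
    note af = act_facts[OF ract \<gamma>Sym[of j]]
    show "0 \<in> P j" unfolding P_def using J(1) af(1) by simp
    show "x + y \<in> P j" if "x \<in> P j" "y \<in> P j" for x y using that J(2) af(2) unfolding P_def by simp
    show "- x \<in> P j" if "x \<in> P j" for x using that J(3) af(4) unfolding P_def by simp
    show "a * x \<in> P j" if "x \<in> P j" for a x using that J(4) af(3) unfolding P_def by simp
  qed
  have Pmono: "P j \<subseteq> P (Suc j)" for j
  proof
    fix a assume "a \<in> P j"
    then have "act (\<gamma> j) a \<in> J j" unfolding P_def by simp
    then have "act (gs j) (act (\<gamma> j) a) \<in> LI \<nu> (Ns (\<psi> (Suc j))) (ms (\<psi> (Suc j)))" by (rule step)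
    moreover have "act (\<gamma> (Suc j)) a = act (gs j) (act (\<gamma> j) a)"
      unfolding \<gamma>S using act_comp[OF ract gsS \<gamma>Sym] .
    moreover have "LI \<nu> (Ns (\<psi> (Suc j))) (ms (\<psi> (Suc j))) \<subseteq> J (Suc j)"
      unfolding J_def by (rule LI_mono[OF mono])
    ultimately show "a \<in> P (Suc j)" unfolding P_def by auto
  qed
  have Pstrict: "\<exists>a\<in>P (Suc j). a \<notin> P j" for j
  proof -
    have "surj (act (\<gamma> (Suc j)))" using act_facts(5)[OF ract \<gamma>Sym] bij_is_surj by blast
    then obtain a0 where a0: "act (\<gamma> (Suc j)) a0 = as (\<psi> (Suc j))" by (metis surjD)
    have "a0 \<in> P (Suc j)" unfolding P_def J_def using a0 asin by simp
    moreover have "a0 \<notin> P j"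
    proof
      assume "a0 \<in> P j"
      then have "act (gs j) (act (\<gamma> j) a0) \<in> LI \<nu> (Ns (\<psi> (Suc j))) (ms (\<psi> (Suc j)))"
        unfolding P_def by (intro step) simp
      moreover have "act (\<gamma> (Suc j)) a0 = act (gs j) (act (\<gamma> j) a0)"
        unfolding \<gamma>S using act_comp[OF ract gsS \<gamma>Sym] .
      ultimately show False using a0 asout[of "\<psi> (Suc j)"] by simp
    qed
    ultimately show ?thesis by blast
  qed
  show False using noeth_chain[where P=P, OF noeth Pid Pmono Pstrict] .
qed



locale skewmod =
  fixes \<Psi> :: "'p set" and act :: "('p \<Rightarrow> 'p) \<Rightarrow> 'a::{ring,monoid_mult} \<Rightarrow> 'a"
    and smult :: "(('p \<Rightarrow> 'p) \<Rightarrow> 'a) \<Rightarrow> 'w::ab_group_add \<Rightarrow> 'w"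
  assumes ract: "ring_aut_action \<Psi> act" and smod: "skew_module (Sym \<Psi>) act smult"
begin

lemma delta_carrier: "g \<in> G \<Longrightarrow> skew_delta g a \<in> skew_carrier G"
  unfolding skew_carrier_def skew_delta_def
proof -
  assume g: "g \<in> G"
  have "{k. (if k = g then a else 0) \<noteq> 0} \<subseteq> {g}" by auto
  then have "finite {k. (if k = g then a else 0) \<noteq> 0}" using finite_subset by blast
  then show "(\<lambda>k. if k = g then a else 0) \<in> {x. finite {g. x g \<noteq> 0} \<and> (\<forall>ga. x ga \<noteq> 0 \<longrightarrow> ga \<in> G)}"
    using g by auto
qed

lemma zero_carrier: "(\<lambda>_. 0) \<in> skew_carrier G"
  unfolding skew_carrier_def by simp

lemma carrier_mono: "G \<subseteq> G' \<Longrightarrow> skew_carrier G \<subseteq> skew_carrier G'"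
  unfolding skew_carrier_def by blast

lemma sm_add: "x \<in> skew_carrier (Sym \<Psi>) \<Longrightarrow> y \<in> skew_carrier (Sym \<Psi>) \<Longrightarrow>
    smult (skew_add x y) w = smult x w + smult y w"
  using smod unfolding skew_module_def by blast

lemma sm_addr: "x \<in> skew_carrier (Sym \<Psi>) \<Longrightarrow> smult x (v + w) = smult x v + smult x w"
  using smod unfolding skew_module_def by blast

lemma sm_mult: "x \<in> skew_carrier (Sym \<Psi>) \<Longrightarrow> y \<in> skew_carrier (Sym \<Psi>) \<Longrightarrow>
    smult (skew_mult act x y) w = smult x (smult y w)"
  using smod unfolding skew_module_def by blast

lemma sm_one: "smult skew_one w = w"
  using smod unfolding skew_module_def by blast

lemma sm_zero: "smult (\<lambda>_. 0) w = 0"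
proof -
  have e: "skew_add (\<lambda>_. 0::'a) (\<lambda>_. 0) = (\<lambda>_. 0)" unfolding skew_add_def by simp
  have "smult (\<lambda>_. 0) w = smult (\<lambda>_. 0) w + smult (\<lambda>_. 0) w"
    using sm_add[OF zero_carrier zero_carrier, where w=w] unfolding e .
  then show ?thesis by simp
qed

lemma sm_zero_r: "x \<in> skew_carrier (Sym \<Psi>) \<Longrightarrow> smult x 0 = 0"
  using sm_addr[of x 0 0] by simp

lemma sm_sum_r: "x \<in> skew_carrier (Sym \<Psi>) \<Longrightarrow> smult x (\<Sum>i\<in>I. f i) = (\<Sum>i\<in>I. smult x (f i))"
  using sum_comp_morphism[of "smult x" f I] sm_zero_r sm_addr by (simp add: comp_def)

lemma delta0: "skew_delta g (0::'a) = (\<lambda>_. 0)"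
  unfolding skew_delta_def by auto

lemma delta_add: "skew_add (skew_delta g (a::'a)) (skew_delta g b) = skew_delta g (a + b)"
  unfolding skew_add_def skew_delta_def by (auto simp: fun_eq_iff)

lemma sm_delta_add: "g \<in> Sym \<Psi> \<Longrightarrow> smult (skew_delta g (a + b)) w = smult (skew_delta g a) w + smult (skew_delta g b) w"
  using sm_add[OF delta_carrier delta_carrier] delta_add by metis

lemma skew_mult_delta:
  assumes "g \<in> Sym \<Psi>"
  shows "skew_mult act (skew_delta g a) (skew_delta h b) = skew_delta (g \<circ> h) (a * act g b)"
proof -
  have z: "act g 0 = 0" using act_facts(1)[OF ract assms] .
  have s1: "{g'. skew_delta g a g' \<noteq> 0} = (if a = 0 then {} else {g})" unfolding skew_delta_def by auto
  have s2: "{h'. skew_delta h b h' \<noteq> 0} = (if b = 0 then {} else {h})" unfolding skew_delta_def by auto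
  show ?thesis
    unfolding skew_mult_def s1 s2
    by (rule ext) (auto simp: skew_delta_def z)
qed

lemma sm_delta_delta:
  assumes "g \<in> Sym \<Psi>" "h \<in> Sym \<Psi>"
  shows "smult (skew_delta g a) (smult (skew_delta h b) w) = smult (skew_delta (g \<circ> h) (a * act g b)) w"
proof -
  have "smult (skew_mult act (skew_delta g a) (skew_delta h b)) w = smult (skew_delta g a) (smult (skew_delta h b) w)"
    by (rule sm_mult[OF delta_carrier[OF assms(1)] delta_carrier[OF assms(2)]])
  then show ?thesis by (simp add: skew_mult_delta[OF assms(1)])
qed

lemma act_id: "act id a = a"
  using ract unfolding ring_aut_action_def by blast

lemma id_Sym: "id \<in> Sym \<Psi>"
  unfolding Sym_def by simp

lemma sm_neg: "smult (skew_delta id (- 1)) w = - w"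
proof -
  have "smult (skew_delta id (- 1)) w + w = smult (skew_delta id (- 1 + 1)) w"
    using sm_delta_add[OF id_Sym, of "- 1 :: 'a" 1 w] sm_one unfolding skew_one_def by simp
  also have "\<dots> = 0" by (simp add: delta0 sm_zero)
  finally show ?thesis by (simp add: eq_neg_iff_add_eq_0)
qed

lemma decomp:
  assumes "x \<in> skew_carrier (Sym \<Psi>)"
  shows "smult x w = (\<Sum>g\<in>{g. x g \<noteq> 0}. smult (skew_delta g (x g)) w)"
proof -
  have "\<forall>x. x \<in> skew_carrier (Sym \<Psi>) \<longrightarrow> {g. x g \<noteq> 0} = F \<longrightarrow>
      smult x w = (\<Sum>g\<in>F. smult (skew_delta g (x g)) w)" if "finite F" for F
    using that
  proof (induction F rule: finite_induct)
    case empty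
    show ?case
    proof (intro allI impI)
      fix x :: "('p \<Rightarrow> 'p) \<Rightarrow> 'a" assume "x \<in> skew_carrier (Sym \<Psi>)" "{g. x g \<noteq> 0} = {}"
      then have "x = (\<lambda>_. 0)" by auto
      then show "smult x w = (\<Sum>g\<in>{}. smult (skew_delta g (x g)) w)" using sm_zero by simp
    qed
  next
    case (insert g0 F)
    show ?case
    proof (intro allI impI)
      fix x :: "('p \<Rightarrow> 'p) \<Rightarrow> 'a" assume x: "x \<in> skew_carrier (Sym \<Psi>)" "{g. x g \<noteq> 0} = insert g0 F"
      define x' where "x' = x(g0 := 0)"
      have x'c: "x' \<in> skew_carrier (Sym \<Psi>)" using x(1) unfolding x'_def skew_carrier_def
        by (auto intro: finite_subset[of _ "{g. x g \<noteq> 0}"])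
      have x's: "{g. x' g \<noteq> 0} = F" using x(2) insert(2) unfolding x'_def by auto
      have g0: "g0 \<in> Sym \<Psi>" using x unfolding skew_carrier_def by auto
      have "x = skew_add (skew_delta g0 (x g0)) x'"
        unfolding skew_add_def skew_delta_def x'_def by (rule ext) simp
      then have "smult x w = smult (skew_delta g0 (x g0)) w + smult x' w"
        using sm_add[OF delta_carrier[OF g0] x'c] by metis
      also have "smult x' w = (\<Sum>g\<in>F. smult (skew_delta g (x' g)) w)" using insert(3) x'c x's by blast
      also have "\<dots> = (\<Sum>g\<in>F. smult (skew_delta g (x g)) w)"
        using insert(2) unfolding x'_def by (intro sum.cong) auto
      finally show "smult x w = (\<Sum>g\<in>insert g0 F. smult (skew_delta g (x g)) w)"
        using insert(1,2) by simp
    qed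
  qed
  moreover have "finite {g. x g \<noteq> 0}" using assms unfolding skew_carrier_def by blast
  ultimately show ?thesis using assms by blast
qed

lemma skew_mult_carrier:
  assumes "\<forall>g\<in>G. \<forall>h\<in>G. g \<circ> h \<in> G" "x \<in> skew_carrier G" "y \<in> skew_carrier G"
  shows "skew_mult act x y \<in> skew_carrier G"
proof -
  have sub: "{k. skew_mult act x y k \<noteq> 0} \<subseteq> (\<lambda>(g,h). g \<circ> h) ` ({g. x g \<noteq> 0} \<times> {h. y h \<noteq> 0})"
  proof
    fix k assume "k \<in> {k. skew_mult act x y k \<noteq> 0}"
    then have "(\<Sum>g\<in>{g. x g \<noteq> 0}. \<Sum>h\<in>{h. y h \<noteq> 0}. if g \<circ> h = k then x g * act g (y h) else 0) \<noteq> 0"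
      unfolding skew_mult_def mem_Collect_eq .
    then obtain g where g: "g \<in> {g. x g \<noteq> 0}"
        "(\<Sum>h\<in>{h. y h \<noteq> 0}. if g \<circ> h = k then x g * act g (y h) else 0) \<noteq> 0"
      by (rule sum.not_neutral_contains_not_neutral)
    from g(2) obtain h where h: "h \<in> {h. y h \<noteq> 0}" "(if g \<circ> h = k then x g * act g (y h) else (0::'a)) \<noteq> 0"
      by (rule sum.not_neutral_contains_not_neutral)
    have "g \<circ> h = k"
    proof (rule ccontr)
      assume "g \<circ> h \<noteq> k" then show False using h(2) by simp
    qed
    then show "k \<in> (\<lambda>(g,h). g \<circ> h) ` ({g. x g \<noteq> 0} \<times> {h. y h \<noteq> 0})" using g(1) h(1) by force
  qed
  have f: "finite {g. x g \<noteq> 0}" "finite {h. y h \<noteq> 0}" using assms(2,3) unfolding skew_carrier_def by blast+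
  have "finite ((\<lambda>(g,h). g \<circ> h) ` ({g. x g \<noteq> 0} \<times> {h. y h \<noteq> 0}))" using f by simp
  then have "finite {k. skew_mult act x y k \<noteq> 0}" using finite_subset[OF sub] by blast
  moreover have "\<forall>k. skew_mult act x y k \<noteq> 0 \<longrightarrow> k \<in> G"
  proof (intro allI impI)
    fix k assume "skew_mult act x y k \<noteq> 0"
    then have "k \<in> (\<lambda>(g,h). g \<circ> h) ` ({g. x g \<noteq> 0} \<times> {h. y h \<noteq> 0})" using sub by blast
    then obtain g h where gh: "x g \<noteq> 0" "y h \<noteq> 0" "k = g \<circ> h" by auto
    have "g \<in> G" "h \<in> G" using gh(1,2) assms(2,3) unfolding skew_carrier_def by blast+
    then show "k \<in> G" using assms(1) gh(3) by blast
  qed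
  ultimately show ?thesis unfolding skew_carrier_def by blast
qed

end



locale gens = skewmod \<Psi> act smult
  for \<Psi> :: "'p set" and act :: "('p \<Rightarrow> 'p) \<Rightarrow> 'a::{ring,monoid_mult} \<Rightarrow> 'a"
    and smult :: "(('p \<Rightarrow> 'p) \<Rightarrow> 'a) \<Rightarrow> 'w::ab_group_add \<Rightarrow> 'w" +
  fixes gl :: "'w list" and tl :: "'p list"
  assumes tl_dist: "distinct tl" and tl_Psi: "set tl \<subseteq> \<Psi>"
    and fixw: "\<And>c g. c < length gl \<Longrightarrow> g \<in> pstab \<Psi> (set tl) \<Longrightarrow> smult (skew_delta g 1) (gl ! c) = gl ! c"
begin

definition ext :: "'p list \<Rightarrow> 'p \<Rightarrow> 'p" where
  "ext f = (SOME g. g \<in> Sym \<Psi> \<and> map g tl = f)"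

definition trm :: "nat \<times> 'p list \<Rightarrow> 'a \<Rightarrow> 'w" where
  "trm m a = smult (skew_delta (ext (snd m)) a) (gl ! fst m)"

definition pi :: "(nat \<times> 'p list \<Rightarrow> 'a) \<Rightarrow> 'w" where
  "pi x = (\<Sum>m\<in>supp x. trm m (x m))"

abbreviation "Mon \<equiv> monC (length gl) (length tl) \<Psi>"
abbreviation "VP \<equiv> VC (length gl) (length tl) \<Psi>"

lemma ext_ex:
  assumes "distinct f" "length f = length tl" "set f \<subseteq> \<Psi>"
  shows "\<exists>g\<in>Sym \<Psi>. map g tl = f"
proof -
  define h where "h x = the (map_of (zip tl f) x)" for x
  have hn: "h (tl ! i) = f ! i" if "i < length tl" for i
    unfolding h_def using map_of_zip_nth[of tl f i] assms(2) tl_dist that by simp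
  have "inj_on h (set tl)"
  proof (rule inj_onI)
    fix x y assume "x \<in> set tl" "y \<in> set tl" "h x = h y"
    then obtain i j where ij: "i < length tl" "j < length tl" "tl ! i = x" "tl ! j = y"
      by (metis in_set_conv_nth)
    then have "f ! i = f ! j" using hn \<open>h x = h y\<close> by metis
    then have "i = j" using assms(1,2) ij(1,2) nth_eq_iff_index_eq by metis
    then show "x = y" using ij by simp
  qed
  then obtain p where p: "p permutes (set tl \<union> h ` set tl)" "\<forall>x\<in>set tl. p x = h x"
    using perm_extend[of "set tl" h] by blast
  have "h ` set tl \<subseteq> set f"
  proof
    fix y assume "y \<in> h ` set tl"
    then obtain i where "i < length tl" "y = h (tl ! i)" by (metis imageE in_set_conv_nth)
    then show "y \<in> set f" using hn assms(2) by simp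
  qed
  then have "set tl \<union> h ` set tl \<subseteq> \<Psi>" using tl_Psi assms(3) by blast
  then have "p permutes \<Psi>" using p(1) permutes_subset by blast
  moreover have "map p tl = f"
  proof (rule nth_equalityI)
    show "length (map p tl) = length f" using assms(2) by simp
    fix i assume "i < length (map p tl)"
    then show "map p tl ! i = f ! i" using p(2) hn by simp
  qed
  ultimately show ?thesis unfolding Sym_def by blast
qed

lemma ext_prop:
  assumes "distinct f" "length f = length tl" "set f \<subseteq> \<Psi>"
  shows "ext f \<in> Sym \<Psi>" "map (ext f) tl = f"
proof -
  have "\<exists>g. g \<in> Sym \<Psi> \<and> map g tl = f" using ext_ex[OF assms] by blast
  then have "ext f \<in> Sym \<Psi> \<and> map (ext f) tl = f" unfolding ext_def by (rule someI_ex)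
  then show "ext f \<in> Sym \<Psi>" "map (ext f) tl = f" by blast+
qed

lemma ext_prop_mon:
  assumes "m \<in> Mon"
  shows "ext (snd m) \<in> Sym \<Psi>" "map (ext (snd m)) tl = snd m"
  using ext_prop[of "snd m"] monC_D[OF assms] by simp_all

lemma ext_irrel:
  assumes g1: "g1 \<in> Sym \<Psi>" and g2: "g2 \<in> Sym \<Psi>" and eq: "map g1 tl = map g2 tl" and c: "c < length gl"
  shows "smult (skew_delta g1 a) (gl ! c) = smult (skew_delta g2 a) (gl ! c)"
proof -
  have p1: "g1 permutes \<Psi>" and p2: "g2 permutes \<Psi>" using g1 g2 unfolding Sym_def by blast+
  define k where "k = inv g1 \<circ> g2"
  have kp: "k permutes \<Psi>" unfolding k_def using permutes_compose[OF p2 permutes_inv[OF p1]] .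
  have "\<forall>t\<in>set tl. g1 t = g2 t" using eq by (simp add: map_eq_conv)
  then have "\<forall>t\<in>set tl. k t = t" unfolding k_def using permutes_inverses(2)[OF p1] by (metis comp_apply)
  then have kst: "k \<in> pstab \<Psi> (set tl)" unfolding pstab_def Sym_def using kp by blast
  have kS: "k \<in> Sym \<Psi>" using kp unfolding Sym_def by blast
  have "g1 \<circ> k = g2" unfolding k_def using permutes_inverses(1)[OF p1] by (simp add: fun_eq_iff)
  have "smult (skew_delta g1 a) (gl ! c) = smult (skew_delta g1 a) (smult (skew_delta k 1) (gl ! c))"
    using fixw[OF c kst] by simp
  also have "\<dots> = smult (skew_delta (g1 \<circ> k) (a * act g1 1)) (gl ! c)"
    by (rule sm_delta_delta[OF g1 kS])
  also have "\<dots> = smult (skew_delta g2 a) (gl ! c)"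
    using \<open>g1 \<circ> k = g2\<close> act_facts(6)[OF ract g1] by simp
  finally show ?thesis .
qed

lemma trm_zero: "trm m 0 = 0"
  unfolding trm_def by (simp add: delta0 sm_zero)

lemma trm_add: "m \<in> Mon \<Longrightarrow> trm m (a + b) = trm m a + trm m b"
  unfolding trm_def using sm_delta_add[OF ext_prop_mon(1)] by blast

lemma pi_superset:
  assumes "finite F" "supp x \<subseteq> F"
  shows "pi x = (\<Sum>m\<in>F. trm m (x m))"
  unfolding pi_def
proof (rule sum.mono_neutral_left[OF assms])
  show "\<forall>i\<in>F - supp x. trm i (x i) = 0" unfolding supp_def using trm_zero by simp
qed

lemma VP_add: "(x::nat \<times> 'p list \<Rightarrow> 'a) \<in> VC n d C \<Longrightarrow> y \<in> VC n d C \<Longrightarrow> (\<lambda>m. x m + y m) \<in> VC n d C"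
proof -
  assume x: "x \<in> VC n d C" and y: "y \<in> VC n d C"
  have "supp (\<lambda>m. x m + y m) \<subseteq> supp x \<union> supp y" unfolding supp_def by auto
  then show ?thesis using x y unfolding VC_def by (auto intro: finite_subset)
qed

lemma VP_neg: "(x::nat \<times> 'p list \<Rightarrow> 'a) \<in> VC n d C \<Longrightarrow> (\<lambda>m. - x m) \<in> VC n d C"
  unfolding VC_def supp_def by simp

lemma VP_scal: "(x::nat \<times> 'p list \<Rightarrow> 'a) \<in> VC n d C \<Longrightarrow> (\<lambda>m. (a::'a) * x m) \<in> VC n d C"
proof -
  assume x: "x \<in> VC n d C"
  have "supp (\<lambda>m. a * x m) \<subseteq> supp x" unfolding supp_def by auto
  then show ?thesis using x unfolding VC_def by (auto intro: finite_subset)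
qed

lemma VP_zero: "(\<lambda>m. 0::'a) \<in> VC n d C"
  unfolding VC_def supp_def by simp

lemma pi_zero: "pi (\<lambda>m. 0) = 0"
  unfolding pi_def supp_def by simp

lemma pi_add:
  assumes x: "x \<in> VP" and y: "y \<in> VP"
  shows "pi (\<lambda>m. x m + y m) = pi x + pi y"
proof -
  define F where "F = supp x \<union> supp y"
  have fF: "finite F" "F \<subseteq> Mon" using x y unfolding F_def VC_def by auto
  have s: "supp (\<lambda>m. x m + y m) \<subseteq> F" unfolding F_def supp_def by auto
  have "pi (\<lambda>m. x m + y m) = (\<Sum>m\<in>F. trm m (x m + y m))" using pi_superset[OF fF(1) s] by simp
  also have "\<dots> = (\<Sum>m\<in>F. trm m (x m) + trm m (y m))"
    using fF(2) trm_add by (intro sum.cong) auto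
  also have "\<dots> = pi x + pi y"
    using pi_superset[OF fF(1), of x] pi_superset[OF fF(1), of y] unfolding F_def
    by (simp add: sum.distrib)
  finally show ?thesis .
qed

lemma pi_neg:
  assumes x: "x \<in> VP"
  shows "pi (\<lambda>m. - x m) = - pi x"
proof -
  have "pi (\<lambda>m. x m + - x m) = pi x + pi (\<lambda>m. - x m)" using pi_add[OF x VP_neg[OF x]] .
  moreover have "(\<lambda>m. x m + - x m) = (\<lambda>m. 0)" by simp
  ultimately show ?thesis using pi_zero by (simp add: eq_neg_iff_add_eq_0 add.commute)
qed

lemma pi_scal:
  assumes x: "x \<in> VP"
  shows "pi (\<lambda>m. a * x m) = smult (skew_delta id a) (pi x)"
proof -
  have fF: "finite (supp x)" "supp x \<subseteq> Mon" using x unfolding VC_def by auto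
  have s: "supp (\<lambda>m. a * x m) \<subseteq> supp x" unfolding supp_def by auto
  have "pi (\<lambda>m. a * x m) = (\<Sum>m\<in>supp x. trm m (a * x m))" using pi_superset[OF fF(1) s] by simp
  also have "\<dots> = (\<Sum>m\<in>supp x. smult (skew_delta id a) (trm m (x m)))"
  proof (rule sum.cong)
    fix m assume "m \<in> supp x"
    then have e: "ext (snd m) \<in> Sym \<Psi>" using fF(2) ext_prop_mon by blast
    show "trm m (a * x m) = smult (skew_delta id a) (trm m (x m))"
      unfolding trm_def using sm_delta_delta[OF id_Sym e] by (simp add: act_id)
  qed simp
  also have "\<dots> = smult (skew_delta id a) (pi x)"
    unfolding pi_def by (simp add: sm_sum_r[OF delta_carrier[OF id_Sym]])
  finally show ?thesis .
qed

lemma mon_map_Mon: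
  assumes "g \<in> Sym \<Psi>" "m \<in> monC n d C" "\<forall>p\<in>C. g p \<in> C"
  shows "mon_map g m \<in> monC n d C"
proof -
  have ig: "inj g" using assms(1) unfolding Sym_def using permutes_inj by blast
  have m: "fst m < n" "length (snd m) = d" "distinct (snd m)" "set (snd m) \<subseteq> C" using monC_D[OF assms(2)] by blast+
  have "distinct (map g (snd m))" using m(3) ig by (simp add: distinct_map inj_on_def)
  moreover have "set (map g (snd m)) \<subseteq> C" using m(4) assms(3) by auto
  ultimately show ?thesis using m(1,2) unfolding monC_def mon_map_def by simp
qed

lemma VC_mact:
  assumes g: "g \<in> Sym \<Psi>" and x: "x \<in> VC n d C" and gC: "\<forall>p\<in>C. g p \<in> C"
  shows "mact act g x \<in> VC n d C"
proof -
  have s: "supp (mact act g x) = mon_map g ` supp x" using supp_mact[OF ract g] .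
  have x': "finite (supp x)" "supp x \<subseteq> monC n d C" using x unfolding VC_def by blast+
  have "finite (supp (mact act g x))" unfolding s using x'(1) by (rule finite_imageI)
  moreover have "supp (mact act g x) \<subseteq> monC n d C"
  proof
    fix m' assume "m' \<in> supp (mact act g x)"
    then obtain m where "m \<in> supp x" "m' = mon_map g m" unfolding s by blast
    then show "m' \<in> monC n d C" using mon_map_Mon[OF g _ gC] x'(2) by blast
  qed
  ultimately show ?thesis unfolding VC_def by blast
qed

lemma Sym_Psi_closed: "g \<in> Sym \<Psi> \<Longrightarrow> \<forall>p\<in>\<Psi>. g p \<in> \<Psi>"
  unfolding Sym_def by (auto simp: permutes_in_image)

lemma pi_mact:
  assumes g: "g \<in> Sym \<Psi>" and x: "x \<in> VP"
  shows "pi (mact act g x) = smult (skew_delta g 1) (pi x)"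
proof -
  have fF: "finite (supp x)" "supp x \<subseteq> Mon" using x unfolding VC_def by auto
  have ig: "inj g" using g unfolding Sym_def using permutes_inj by blast
  have inj: "inj_on (mon_map g) (supp x)"
  proof (rule inj_onI)
    fix m1 m2 assume "mon_map g m1 = mon_map g m2"
    then have "fst m1 = fst m2" "map g (snd m1) = map g (snd m2)" unfolding mon_map_def by simp_all
    then show "m1 = m2" using ig by (simp add: inj_map_eq_map prod_eq_iff)
  qed
  have "pi (mact act g x) = (\<Sum>m\<in>mon_map g ` supp x. trm m (mact act g x m))"
    unfolding pi_def using supp_mact[OF ract g] by simp
  also have "\<dots> = (\<Sum>m\<in>supp x. trm (mon_map g m) (mact act g x (mon_map g m)))"
    using sum.reindex[OF inj] by simp
  also have "\<dots> = (\<Sum>m\<in>supp x. smult (skew_delta g 1) (trm m (x m)))"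
  proof (rule sum.cong)
    fix m assume m: "m \<in> supp x"
    then have mM: "m \<in> Mon" using fF by blast
    have e: "ext (snd m) \<in> Sym \<Psi>" "map (ext (snd m)) tl = snd m" using ext_prop_mon[OF mM] by blast+
    have mM': "mon_map g m \<in> Mon" using mon_map_Mon[OF g mM Sym_Psi_closed[OF g]] .
    have e': "ext (snd (mon_map g m)) \<in> Sym \<Psi>" "map (ext (snd (mon_map g m))) tl = snd (mon_map g m)"
      using ext_prop_mon[OF mM'] by blast+
    have gS: "g \<circ> ext (snd m) \<in> Sym \<Psi>" using g e(1) unfolding Sym_def by (simp add: permutes_compose)
    have c: "fst m < length gl" using monC_D(1)[OF mM] .
    have "map (g \<circ> ext (snd m)) tl = map g (map (ext (snd m)) tl)" by simp
    also have "\<dots> = map g (snd m)" using e(2) by simp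
    finally have "map (ext (snd (mon_map g m))) tl = map (g \<circ> ext (snd m)) tl"
      using e'(2) unfolding mon_map_def by simp
    then have "trm (mon_map g m) (act g (x m)) = smult (skew_delta (g \<circ> ext (snd m)) (act g (x m))) (gl ! fst m)"
      unfolding trm_def using ext_irrel[OF e'(1) gS _ c] by (simp add: mon_map_def)
    also have "\<dots> = smult (skew_delta g 1) (trm m (x m))"
      unfolding trm_def using sm_delta_delta[OF g e(1), of 1 "x m"] by simp
    finally show "trm (mon_map g m) (mact act g x (mon_map g m)) = smult (skew_delta g 1) (trm m (x m))"
      using mact_app[OF g, of act x m] by simp
  qed simp
  also have "\<dots> = smult (skew_delta g 1) (pi x)"
    unfolding pi_def by (simp add: sm_sum_r[OF delta_carrier[OF g]])
  finally show ?thesis .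
qed

end



context skewmod
begin

lemma carrier_add:
  "(x::('p \<Rightarrow> 'p) \<Rightarrow> 'a) \<in> skew_carrier G \<Longrightarrow> y \<in> skew_carrier G \<Longrightarrow> skew_add x y \<in> skew_carrier G"
proof -
  assume x: "x \<in> skew_carrier G" and y: "y \<in> skew_carrier G"
  have s: "{g. skew_add x y g \<noteq> 0} \<subseteq> {g. x g \<noteq> 0} \<union> {g. y g \<noteq> 0}" unfolding skew_add_def by auto
  have "finite {g. x g \<noteq> 0}" "finite {g. y g \<noteq> 0}" using x y unfolding skew_carrier_def by blast+
  then have "finite {g. skew_add x y g \<noteq> 0}" using s finite_subset by blast
  moreover have "\<forall>g. skew_add x y g \<noteq> 0 \<longrightarrow> g \<in> G" using s x y unfolding skew_carrier_def by blast
  ultimately show ?thesis unfolding skew_carrier_def by blast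
qed

lemma ms_zero: "0 \<in> mspan (skew_carrier G) smult F"
proof -
  have "(\<Sum>f\<in>F. smult (\<lambda>_. 0) f) = 0" by (simp add: sm_zero)
  moreover have "\<forall>f\<in>F. (\<lambda>_. 0) \<in> skew_carrier G" using zero_carrier by blast
  ultimately show ?thesis unfolding mspan_def by (intro CollectI exI[where x="\<lambda>_. (\<lambda>_. 0)"]) simp
qed

lemma ms_add:
  assumes GS: "G \<subseteq> Sym \<Psi>" and a: "a \<in> mspan (skew_carrier G) smult F" and b: "b \<in> mspan (skew_carrier G) smult F"
  shows "a + b \<in> mspan (skew_carrier G) smult F"
proof -
  obtain c where c: "a = (\<Sum>f\<in>F. smult (c f) f)" "\<forall>f\<in>F. c f \<in> skew_carrier G" using a unfolding mspan_def by blast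
  obtain c' where c': "b = (\<Sum>f\<in>F. smult (c' f) f)" "\<forall>f\<in>F. c' f \<in> skew_carrier G" using b unfolding mspan_def by blast
  have cs: "skew_carrier G \<subseteq> skew_carrier (Sym \<Psi>)" using carrier_mono[OF GS] .
  have "a + b = (\<Sum>f\<in>F. smult (skew_add (c f) (c' f)) f)"
    unfolding c(1) c'(1) sum.distrib[symmetric]
  proof (rule sum.cong)
    fix f assume "f \<in> F"
    then have "c f \<in> skew_carrier (Sym \<Psi>)" "c' f \<in> skew_carrier (Sym \<Psi>)" using c(2) c'(2) cs by blast+
    then show "smult (c f) f + smult (c' f) f = smult (skew_add (c f) (c' f)) f" by (simp add: sm_add)
  qed simp
  moreover have "\<forall>f\<in>F. skew_add (c f) (c' f) \<in> skew_carrier G" using c(2) c'(2) carrier_add by blast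
  ultimately have "\<exists>c2. a + b = (\<Sum>f\<in>F. smult (c2 f) f) \<and> (\<forall>f\<in>F. c2 f \<in> skew_carrier G)"
    by (intro exI[where x="\<lambda>f. skew_add (c f) (c' f)"]) simp
  then show ?thesis unfolding mspan_def by (simp only: mem_Collect_eq)
qed

lemma ms_smult:
  assumes GS: "G \<subseteq> Sym \<Psi>" and Gc: "\<forall>g\<in>G. \<forall>h\<in>G. g \<circ> h \<in> G"
    and x: "x \<in> skew_carrier G" and a: "a \<in> mspan (skew_carrier G) smult F"
  shows "smult x a \<in> mspan (skew_carrier G) smult F"
proof -
  obtain c where c: "a = (\<Sum>f\<in>F. smult (c f) f)" "\<forall>f\<in>F. c f \<in> skew_carrier G" using a unfolding mspan_def by blast
  have cs: "skew_carrier G \<subseteq> skew_carrier (Sym \<Psi>)" using carrier_mono[OF GS] .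
  have "smult x a = (\<Sum>f\<in>F. smult x (smult (c f) f))" unfolding c(1) using sm_sum_r x cs by blast
  also have "\<dots> = (\<Sum>f\<in>F. smult (skew_mult act x (c f)) f)"
  proof (rule sum.cong)
    fix f assume "f \<in> F"
    then have "c f \<in> skew_carrier (Sym \<Psi>)" "x \<in> skew_carrier (Sym \<Psi>)" using c(2) x cs by blast+
    then show "smult x (smult (c f) f) = smult (skew_mult act x (c f)) f" by (simp add: sm_mult)
  qed simp
  finally have "smult x a = (\<Sum>f\<in>F. smult (skew_mult act x (c f)) f)" .
  moreover have "\<forall>f\<in>F. skew_mult act x (c f) \<in> skew_carrier G" using c(2) skew_mult_carrier[OF Gc x] by blast
  ultimately have "\<exists>c2. smult x a = (\<Sum>f\<in>F. smult (c2 f) f) \<and> (\<forall>f\<in>F. c2 f \<in> skew_carrier G)"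
    by (intro exI[where x="\<lambda>f. skew_mult act x (c f)"]) simp
  then show ?thesis unfolding mspan_def by (simp only: mem_Collect_eq)
qed

lemma ms_gen:
  assumes "finite F" "f0 \<in> F" "id \<in> G"
  shows "f0 \<in> mspan (skew_carrier G) smult F"
proof -
  define c :: "'w \<Rightarrow> ('p \<Rightarrow> 'p) \<Rightarrow> 'a" where "c f = (if f = f0 then skew_one else (\<lambda>_. 0))" for f
  have "(\<Sum>f\<in>F. smult (c f) f) = smult (c f0) f0 + (\<Sum>f\<in>F - {f0}. smult (c f) f)"
    using sum.remove[OF assms(1,2)] by blast
  also have "(\<Sum>f\<in>F - {f0}. smult (c f) f) = 0" unfolding c_def by (simp add: sm_zero)
  finally have "(\<Sum>f\<in>F. smult (c f) f) = f0" unfolding c_def by (simp add: sm_one)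
  moreover have "\<forall>f\<in>F. c f \<in> skew_carrier G"
    unfolding c_def skew_one_def by (simp add: delta_carrier[OF assms(3)] zero_carrier)
  ultimately show ?thesis unfolding mspan_def by (intro CollectI exI[where x=c]) simp
qed

lemma ms_mono:
  assumes "finite F'" "F \<subseteq> F'"
  shows "mspan (skew_carrier G) smult F \<subseteq> mspan (skew_carrier G) smult F'"
proof
  fix a assume "a \<in> mspan (skew_carrier G) smult F"
  then obtain c where c: "a = (\<Sum>f\<in>F. smult (c f) f)" "\<forall>f\<in>F. c f \<in> skew_carrier G" unfolding mspan_def by blast
  define c' :: "'w \<Rightarrow> ('p \<Rightarrow> 'p) \<Rightarrow> 'a" where "c' f = (if f \<in> F then c f else (\<lambda>_. 0))" for f
  have "(\<Sum>f\<in>F'. smult (c' f) f) = (\<Sum>f\<in>F. smult (c' f) f)"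
    by (rule sum.mono_neutral_right[OF assms]) (simp add: c'_def sm_zero)
  also have "\<dots> = a" unfolding c(1) c'_def by simp
  finally have "a = (\<Sum>f\<in>F'. smult (c' f) f)" by simp
  moreover have "\<forall>f\<in>F'. c' f \<in> skew_carrier G" unfolding c'_def using c(2) by (simp add: zero_carrier)
  ultimately show "a \<in> mspan (skew_carrier G) smult F'" unfolding mspan_def by blast
qed

lemma ms_sub:
  assumes N: "submodule (skew_carrier G) smult N" and F: "F \<subseteq> N"
  shows "mspan (skew_carrier G) smult F \<subseteq> N"
proof
  fix a assume "a \<in> mspan (skew_carrier G) smult F"
  then obtain c where c: "a = (\<Sum>f\<in>F. smult (c f) f)" "\<forall>f\<in>F. c f \<in> skew_carrier G" unfolding mspan_def by blast
  have N0: "0 \<in> N" and Nadd: "\<forall>v\<in>N. \<forall>w\<in>N. v + w \<in> N" and Nsm: "\<forall>x\<in>skew_carrier G. \<forall>w\<in>N. smult x w \<in> N"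
    using N unfolding submodule_def by blast+
  have "(\<Sum>f\<in>F'. smult (c f) f) \<in> N" if "F' \<subseteq> F" for F'
  proof (cases "finite F'")
    case True
    then show ?thesis using that
    proof (induction F' rule: finite_induct)
      case empty then show ?case using N0 by simp
    next
      case (insert f F')
      then have "smult (c f) f \<in> N" using Nsm c(2) F by blast
      then show ?case using insert Nadd by simp
    qed
  next
    case False then show ?thesis using N0 by simp
  qed
  then show "a \<in> N" unfolding c(1) by blast
qed

end

context gens
begin

lemma R_sum:
  assumes "\<forall>i\<in>I. f i \<in> pi ` VP"
  shows "(\<Sum>i\<in>I. f i) \<in> pi ` VP"
proof (cases "finite I")
  case True
  then show ?thesis using assms
  proof (induction I rule: finite_induct)
    case empty
    show ?case by (rule image_eqI[where x="\<lambda>m. 0"]) (simp_all add: pi_zero VP_zero)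
  next
    case (insert i I)
    have "f i \<in> pi ` VP" using insert.prems[rule_format, OF insertI1] .
    then obtain x where x: "x \<in> VP" "pi x = f i" by (rule imageE) simp
    have "\<forall>j\<in>I. f j \<in> pi ` VP" using insert.prems by (intro ballI) blast
    then have "(\<Sum>i\<in>I. f i) \<in> pi ` VP" by (rule insert.IH)
    then obtain y where y: "y \<in> VP" "pi y = (\<Sum>i\<in>I. f i)" by (rule imageE) simp
    have "pi (\<lambda>m. x m + y m) = (\<Sum>i\<in>insert i I. f i)"
      using pi_add[OF x(1) y(1)] x(2) y(2) insert(1,2) by simp
    moreover have "(\<lambda>m. x m + y m) \<in> VP" using VP_add[OF x(1) y(1)] .
    ultimately show ?case by (rule image_eqI[OF sym])
  qed
next
  case False
  then show ?thesis by (intro image_eqI[where x="\<lambda>m. 0"]) (simp_all add: pi_zero VP_zero)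
qed

lemma R_delta:
  assumes g: "g \<in> Sym \<Psi>" and c: "c < length gl"
  shows "smult (skew_delta g a) (gl ! c) \<in> pi ` VP"
proof -
  define m0 where "m0 = (c, map g tl)"
  have ig: "inj g" using g unfolding Sym_def using permutes_inj by blast
  have "distinct (map g tl)" using tl_dist ig by (simp add: distinct_map inj_on_def)
  moreover have "set (map g tl) \<subseteq> \<Psi>" using tl_Psi Sym_Psi_closed[OF g] by auto
  ultimately have m0M: "m0 \<in> Mon" unfolding m0_def monC_def using c by simp
  define x where "x m = (if m = m0 then a else 0)" for m
  have sx: "supp x \<subseteq> {m0}" unfolding x_def supp_def by auto
  have xV: "x \<in> VP" unfolding VC_def using sx m0M finite_subset by blast
  have "pi x = (\<Sum>m\<in>{m0}. trm m (x m))" using pi_superset[OF _ sx] by simp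
  also have "\<dots> = smult (skew_delta (ext (map g tl)) a) (gl ! c)" unfolding trm_def x_def m0_def by simp
  also have "\<dots> = smult (skew_delta g a) (gl ! c)"
  proof (rule ext_irrel[OF _ g _ c])
    show "ext (map g tl) \<in> Sym \<Psi>" "map (ext (map g tl)) tl = map g tl"
      using ext_prop_mon[OF m0M] unfolding m0_def by simp_all
  qed
  finally show ?thesis using xV by (metis image_eqI)
qed

lemma R_sm:
  assumes x: "x \<in> skew_carrier (Sym \<Psi>)" and c: "c < length gl"
  shows "smult x (gl ! c) \<in> pi ` VP"
proof -
  have "\<forall>g\<in>{g. x g \<noteq> 0}. smult (skew_delta g (x g)) (gl ! c) \<in> pi ` VP"
  proof
    fix g assume "g \<in> {g. x g \<noteq> 0}"
    then have "g \<in> Sym \<Psi>" using x unfolding skew_carrier_def by blast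
    then show "smult (skew_delta g (x g)) (gl ! c) \<in> pi ` VP" using R_delta c by blast
  qed
  then have "(\<Sum>g\<in>{g. x g \<noteq> 0}. smult (skew_delta g (x g)) (gl ! c)) \<in> pi ` VP" by (rule R_sum)
  then show ?thesis using decomp[OF x, of "gl ! c"] by simp
qed

lemma pi_surj:
  assumes span: "UNIV = mspan (skew_carrier (Sym \<Psi>)) smult (set gl)"
  shows "\<exists>x\<in>VP. pi x = w"
proof -
  have "w \<in> mspan (skew_carrier (Sym \<Psi>)) smult (set gl)" using span by blast
  then obtain cf where cf: "w = (\<Sum>f\<in>set gl. smult (cf f) f)" "\<forall>f\<in>set gl. cf f \<in> skew_carrier (Sym \<Psi>)"
    unfolding mspan_def by blast
  have "\<forall>f\<in>set gl. smult (cf f) f \<in> pi ` VP"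
  proof
    fix f assume f: "f \<in> set gl"
    then obtain c where "c < length gl" "gl ! c = f" by (metis in_set_conv_nth)
    then show "smult (cf f) f \<in> pi ` VP" using R_sm cf(2) f by blast
  qed
  then have "w \<in> pi ` VP" unfolding cf(1) by (rule R_sum)
  then show ?thesis by blast
qed

end



theorem corollary4p12:
  fixes \<Psi> :: "'p set"
    and act :: "('p \<Rightarrow> 'p) \<Rightarrow> 'a::{ring,monoid_mult} \<Rightarrow> 'a"
    and smult :: "(('p \<Rightarrow> 'p) \<Rightarrow> 'a) \<Rightarrow> 'w::ab_group_add \<Rightarrow> 'w"
    and U :: "('p \<Rightarrow> 'p) set"
  assumes "left_noetherian TYPE('a)"
    and "ring_aut_action \<Psi> act"
    and "smooth_ring_action \<Psi> act"
    and "skew_module (Sym \<Psi>) act smult"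
    and "smooth_module \<Psi> smult"
    and "fin_gen_module (skew_carrier (Sym \<Psi>)) smult"
    and "open_subgroup \<Psi> U"
  shows "noetherian_module (skew_carrier U) smult"
proof -
  interpret skewmod \<Psi> act smult using assms(2) assms(4) by (rule skewmod.intro)
  obtain F0 where F0: "finite F0" "UNIV = mspan (skew_carrier (Sym \<Psi>)) smult F0"
    using assms(6) unfolding fin_gen_module_def by blast
  obtain gl where gl: "distinct gl" "set gl = F0" using finite_distinct_list[OF F0(1)] by blast
  have stab: "\<exists>T. finite T \<and> T \<subseteq> \<Psi> \<and> pstab \<Psi> T \<subseteq> {g \<in> Sym \<Psi>. smult (skew_delta g 1) w = w}" for w
  proof -
    have po: "perm_open \<Psi> {g \<in> Sym \<Psi>. smult (skew_delta g 1) w = w}"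
      using assms(5) unfolding smooth_module_def by blast
    have "id \<in> {g \<in> Sym \<Psi>. smult (skew_delta g 1) w = w}"
      using id_Sym sm_one unfolding skew_one_def by simp
    then obtain T where T: "finite T" "T \<subseteq> \<Psi>" "(\<lambda>h. id \<circ> h) ` pstab \<Psi> T \<subseteq> {g \<in> Sym \<Psi>. smult (skew_delta g 1) w = w}"
      using po unfolding perm_open_def by blast
    moreover have "(\<lambda>h. id \<circ> h) ` pstab \<Psi> T = pstab \<Psi> T" by simp
    ultimately show ?thesis by auto
  qed
  define Tw where "Tw w = (SOME T. finite T \<and> T \<subseteq> \<Psi> \<and> pstab \<Psi> T \<subseteq> {g \<in> Sym \<Psi>. smult (skew_delta g 1) w = w})" for w
  have Tw: "finite (Tw w) \<and> Tw w \<subseteq> \<Psi> \<and> pstab \<Psi> (Tw w) \<subseteq> {g \<in> Sym \<Psi>. smult (skew_delta g 1) w = w}" for w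
    unfolding Tw_def using stab[of w] by (rule someI_ex)
  define T where "T = (\<Union>w\<in>F0. Tw w)"
  have fT: "finite T" unfolding T_def using F0(1) Tw by blast
  have TP: "T \<subseteq> \<Psi>" unfolding T_def using Tw by blast
  obtain tl where tl: "distinct tl" "set tl = T" using finite_distinct_list[OF fT] by blast
  have pstab_anti: "pstab \<Psi> B \<subseteq> pstab \<Psi> A" if "A \<subseteq> B" for A B using that unfolding pstab_def by blast
  interpret gens \<Psi> act smult gl tl
  proof (unfold_locales)
    show "distinct tl" by (rule tl(1))
    show "set tl \<subseteq> \<Psi>" using tl(2) TP by simp
    fix c g assume c: "c < length gl" and g: "g \<in> pstab \<Psi> (set tl)"
    have w: "gl ! c \<in> F0" using c gl(2) nth_mem by blast
    then have "Tw (gl ! c) \<subseteq> set tl" unfolding tl(2) T_def by blast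
    then have "g \<in> pstab \<Psi> (Tw (gl ! c))" using g pstab_anti by blast
    then show "smult (skew_delta g 1) (gl ! c) = gl ! c" using Tw[of "gl ! c"] by blast
  qed
  have span: "UNIV = mspan (skew_carrier (Sym \<Psi>)) smult (set gl)" using F0(2) gl(2) by simp
  have Usub: "perm_subgroup \<Psi> U" and Uop: "perm_open \<Psi> U" using assms(7) unfolding open_subgroup_def by blast+
  have US: "U \<subseteq> Sym \<Psi>" and idU: "id \<in> U" and Uc: "\<forall>g\<in>U. \<forall>h\<in>U. g \<circ> h \<in> U"
    using Usub unfolding perm_subgroup_def by blast+
  obtain S where S: "finite S" "S \<subseteq> \<Psi>" "(\<lambda>h. id \<circ> h) ` pstab \<Psi> S \<subseteq> U"
    using Uop idU unfolding perm_open_def by blast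
  have SU: "pstab \<Psi> S \<subseteq> U" using S(3) by simp
  show ?thesis unfolding noetherian_module_def
  proof (intro allI impI)
    fix N assume N: "submodule (skew_carrier U) smult N"
    show "\<exists>F. finite F \<and> F \<subseteq> N \<and> N = mspan (skew_carrier U) smult F"
    proof (rule ccontr)
      assume nfg: "\<not> (\<exists>F. finite F \<and> F \<subseteq> N \<and> N = mspan (skew_carrier U) smult F)"
      define nxt where "nxt F = (SOME w. w \<in> N \<and> w \<notin> mspan (skew_carrier U) smult F)" for F
      have nxtp: "nxt F \<in> N \<and> nxt F \<notin> mspan (skew_carrier U) smult F" if "finite F" "F \<subseteq> N" for F
      proof -
        have "mspan (skew_carrier U) smult F \<subseteq> N" using ms_sub[OF N that(2)] .
        moreover have "N \<noteq> mspan (skew_carrier U) smult F" using nfg that by blast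
        ultimately have "\<exists>w. w \<in> N \<and> w \<notin> mspan (skew_carrier U) smult F" by blast
        then show ?thesis unfolding nxt_def by (rule someI_ex)
      qed
      define Fs where "Fs = rec_nat {} (\<lambda>k A. insert (nxt A) A)"
      have Fs0: "Fs 0 = {}" and FsS: "Fs (Suc k) = insert (nxt (Fs k)) (Fs k)" for k
        by (simp_all add: Fs_def)
      have Fsf: "finite (Fs k) \<and> Fs k \<subseteq> N" for k
      proof (induction k)
        case 0 then show ?case using Fs0 by simp
      next
        case (Suc k)
        then have "nxt (Fs k) \<in> N" using nxtp by blast
        then show ?case using Suc FsS by simp
      qed
      define W where "W k = mspan (skew_carrier U) smult (Fs k)" for k
      define xs where "xs k = (SOME x. x \<in> VP \<and> pi x = nxt (Fs k))" for k
      have xsp: "xs k \<in> VP \<and> pi (xs k) = nxt (Fs k)" for k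
      proof -
        have "\<exists>x. x \<in> VP \<and> pi x = nxt (Fs k)" using pi_surj[OF span] by blast
        then show ?thesis unfolding xs_def by (rule someI_ex)
      qed
      define C where "C = S \<union> (\<Union>k. \<Union>m\<in>supp (xs k). set (snd m))"
      have fsupp: "finite (supp (xs k))" "supp (xs k) \<subseteq> Mon" for k using xsp[of k] unfolding VC_def by blast+
      have cC: "countable C"
        unfolding C_def using S(1) fsupp(1) by (intro countable_Un countable_UN) (auto intro: countable_finite)
      have SC: "S \<subseteq> C" unfolding C_def by blast
      have CP: "C \<subseteq> \<Psi>"
      proof -
        have "set (snd m) \<subseteq> \<Psi>" if "m \<in> supp (xs k)" for m k using fsupp(2)[of k] that monC_D(4) by blast
        then show ?thesis unfolding C_def using S(2) by blast
      qed
      have VCsub: "VC (length gl) (length tl) C \<subseteq> VP"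
        unfolding VC_def monC_def using CP by auto
      define Ns where "Ns k = {x. x \<in> VC (length gl) (length tl) C \<and> pi x \<in> W k}" for k
      have cl: "closedN act \<Psi> S C (length gl) (length tl) (Ns k)" for k
        unfolding closedN_def
      proof (intro conjI ballI allI)
        show "Ns k \<subseteq> VC (length gl) (length tl) C" unfolding Ns_def by blast
        show "(\<lambda>m. 0) \<in> Ns k" unfolding Ns_def W_def using VP_zero pi_zero ms_zero by simp
      next
        fix x y assume x: "x \<in> Ns k" and y: "y \<in> Ns k"
        then have xV: "x \<in> VC (length gl) (length tl) C" "pi x \<in> W k" and yV: "y \<in> VC (length gl) (length tl) C" "pi y \<in> W k"
          unfolding Ns_def by blast+
        have "pi (\<lambda>m. x m + y m) = pi x + pi y" using pi_add xV(1) yV(1) VCsub by blast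
        moreover have "pi x + pi y \<in> W k" unfolding W_def using ms_add[OF US] xV(2) yV(2) unfolding W_def by blast
        ultimately show "(\<lambda>m. x m + y m) \<in> Ns k" unfolding Ns_def using VP_add[OF xV(1) yV(1)] by simp
      next
        fix x assume x: "x \<in> Ns k"
        then have xV: "x \<in> VC (length gl) (length tl) C" "pi x \<in> W k" unfolding Ns_def by blast+
        have "pi (\<lambda>m. - x m) = smult (skew_delta id (- 1)) (pi x)" using pi_neg xV(1) VCsub sm_neg by auto
        moreover have "smult (skew_delta id (- 1)) (pi x) \<in> W k"
          unfolding W_def by (rule ms_smult[OF US Uc delta_carrier[OF idU]]) (use xV(2) W_def in simp)
        ultimately show "(\<lambda>m. - x m) \<in> Ns k" unfolding Ns_def using VP_neg[OF xV(1)] by simp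
      next
        fix a x assume x: "x \<in> Ns k"
        then have xV: "x \<in> VC (length gl) (length tl) C" "pi x \<in> W k" unfolding Ns_def by blast+
        have "pi (\<lambda>m. a * x m) = smult (skew_delta id a) (pi x)" using pi_scal xV(1) VCsub by blast
        moreover have "smult (skew_delta id a) (pi x) \<in> W k"
          unfolding W_def by (rule ms_smult[OF US Uc delta_carrier[OF idU]]) (use xV(2) W_def in simp)
        ultimately show "(\<lambda>m. a * x m) \<in> Ns k" unfolding Ns_def using VP_scal[OF xV(1)] by simp
      next
        fix g x assume g: "g \<in> HC \<Psi> S C" and x: "x \<in> Ns k"
        then have xV: "x \<in> VC (length gl) (length tl) C" "pi x \<in> W k" unfolding Ns_def by blast+
        have gS: "g \<in> Sym \<Psi>" using HC_Sym[OF g] .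
        have gp: "g permutes \<Psi>" "\<forall>s\<in>S. g s = s" "\<forall>p. p \<notin> C \<longrightarrow> g p = p" using g unfolding HC_def by blast+
        have gU: "g \<in> U" using SU gS gp(2) unfolding pstab_def by blast
        have gC: "\<forall>p\<in>C. g p \<in> C"
        proof (rule ballI, rule ccontr)
          fix p assume p: "p \<in> C" "g p \<notin> C"
          then have "g (g p) = g p" using gp(3) by blast
          then have "g p = p" using permutes_inj[OF gp(1)] by (meson injD)
          then show False using p by simp
        qed
        have "pi (mact act g x) = smult (skew_delta g 1) (pi x)" using pi_mact[OF gS] xV(1) VCsub by blast
        moreover have "smult (skew_delta g 1) (pi x) \<in> W k"
          unfolding W_def by (rule ms_smult[OF US Uc delta_carrier[OF gU]]) (use xV(2) W_def in simp)
        ultimately show "mact act g x \<in> Ns k" unfolding Ns_def using VC_mact[OF gS xV(1) gC] by simp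
      qed
      have mono: "Ns k \<subseteq> Ns (Suc k)" for k
      proof -
        have "W k \<subseteq> W (Suc k)" unfolding W_def using ms_mono Fsf FsS by (metis subset_insertI)
        then show ?thesis unfolding Ns_def by blast
      qed
      have strict: "\<exists>x\<in>Ns (Suc k). x \<notin> Ns k" for k
      proof -
        have xC: "xs k \<in> VC (length gl) (length tl) C"
        proof -
          have "supp (xs k) \<subseteq> monC (length gl) (length tl) C"
          proof
            fix m assume m: "m \<in> supp (xs k)"
            then have "m \<in> Mon" using fsupp(2) by blast
            moreover have "set (snd m) \<subseteq> C" unfolding C_def using m by blast
            ultimately show "m \<in> monC (length gl) (length tl) C" unfolding monC_def by auto
          qed
          then show ?thesis using fsupp(1) unfolding VC_def by blast
        qed
        have "nxt (Fs k) \<in> W (Suc k)" unfolding W_def FsS using ms_gen Fsf idU by (metis finite_insert insertI1)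
        moreover have "nxt (Fs k) \<notin> W k" unfolding W_def using nxtp Fsf by blast
        ultimately show ?thesis unfolding Ns_def using xC xsp by auto
      qed
      show False using core[where Ns=Ns, OF assms(1) assms(2) cC SC S(1) CP cl mono strict] .
    qed
  qed
qed


end
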